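(* For every integer $n\ge3$ there is a partition $\pi$ of $\{0,1,\dots,2n\}\times\{0,1,\dots,2n\}$ consisting of the singleton $\{(0,0)\}$ and two-element sets such that $\pi$ is nondegenerate and the group $\Gamma_\pi$ is non-amenable and sofic. In particular there are infinitely many non-amenable $\mathrm{ULIE}_{\mathbb{F}_2}$ groups.
   Context: For a partition $\pi$ of $\{0,\dots,m-1\}\times\{0,\dots,n'-1\}$ (with $m,n'\ge 2$), $\Gamma_\pi$ is the group with generators $a_0,\dots,a_{m-1},b_0,\dots,b_{n'-1}$ and relations $a_0=b_0=1$ and $a_ib_j=a_{i'}b_{j'}$ whenever $(i,j)$ and $(i',j')$ lie in the same block of $\pi$. $\pi$ is nondegenerate if in $\Gamma_\pi$ the $a_i$ are pairwise distinct and the $b_j$ are pairwise distinct. Over the field $\mathbb{F}_2$ of two elements, the partitions that are minimally realizable (i.e., minimal under refinement among partitions for which each block containing $(0,0)$ has odd size and all other blocks have even size) are exactly those consisting of the singleton $\{(0,0)\}$ and two-element sets; an $\mathrm{ULIE}_{\mathbb{F}_2}$ group is a group $\Gamma_\pi$ for a nondegenerate such partition. *)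

theory Defs
  imports Complex_Main "HOL-Algebra.Group"
begin

datatype gen = GA nat | GB nat

fun valid_gen :: "nat \<Rightarrow> nat \<Rightarrow> gen \<Rightarrow> bool" where
  "valid_gen m n' (GA i) = (i < m)"
| "valid_gen m n' (GB j) = (j < n')"

text \<open>A letter is a generator together with a flag: True = the generator, False = its inverse.\<close>
type_synonym word = "(gen \<times> bool) list"

inductive weq :: "nat \<Rightarrow> nat \<Rightarrow> (nat \<times> nat) set set \<Rightarrow> word \<Rightarrow> word \<Rightarrow> bool"
  for m n' \<pi> where
  refl: "weq m n' \<pi> w w"
| sym: "weq m n' \<pi> u w \<Longrightarrow> weq m n' \<pi> w u"
| trans: "weq m n' \<pi> u v \<Longrightarrow> weq m n' \<pi> v w \<Longrightarrow> weq m n' \<pi> u w"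
| cancel: "valid_gen m n' x \<Longrightarrow>
    weq m n' \<pi> (u @ [(x, e), (x, \<not> e)] @ v) (u @ v)"
| rel_a0: "weq m n' \<pi> (u @ [(GA 0, True)] @ v) (u @ v)"
| rel_b0: "weq m n' \<pi> (u @ [(GB 0, True)] @ v) (u @ v)"
| rel_block: "P \<in> \<pi> \<Longrightarrow> (i, j) \<in> P \<Longrightarrow> (i', j') \<in> P \<Longrightarrow>
    weq m n' \<pi> (u @ [(GA i, True), (GB j, True)] @ v) (u @ [(GA i', True), (GB j', True)] @ v)"

definition wclass :: "nat \<Rightarrow> nat \<Rightarrow> (nat \<times> nat) set set \<Rightarrow> word \<Rightarrow> word set" where
  "wclass m n' \<pi> w = {w'. weq m n' \<pi> w w'}"

definition Gamma :: "nat \<Rightarrow> nat \<Rightarrow> (nat \<times> nat) set set \<Rightarrow> word set monoid" where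
  "Gamma m n' \<pi> =
    \<lparr> carrier = {wclass m n' \<pi> w | w. list_all (\<lambda>(x, e). valid_gen m n' x) w},
      mult = (\<lambda>X Y. wclass m n' \<pi> ((SOME u. u \<in> X) @ (SOME v. v \<in> Y))),
      one = wclass m n' \<pi> [] \<rparr>"

definition gen_a :: "nat \<Rightarrow> nat \<Rightarrow> (nat \<times> nat) set set \<Rightarrow> nat \<Rightarrow> word set" where
  "gen_a m n' \<pi> i = wclass m n' \<pi> [(GA i, True)]"

definition gen_b :: "nat \<Rightarrow> nat \<Rightarrow> (nat \<times> nat) set set \<Rightarrow> nat \<Rightarrow> word set" where
  "gen_b m n' \<pi> j = wclass m n' \<pi> [(GB j, True)]"

definition nondegenerate :: "nat \<Rightarrow> nat \<Rightarrow> (nat \<times> nat) set set \<Rightarrow> bool" where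
  "nondegenerate m n' \<pi> \<longleftrightarrow>
     (\<forall>i < m. \<forall>i' < m. i \<noteq> i' \<longrightarrow> gen_a m n' \<pi> i \<noteq> gen_a m n' \<pi> i') \<and>
     (\<forall>j < n'. \<forall>j' < n'. j \<noteq> j' \<longrightarrow> gen_b m n' \<pi> j \<noteq> gen_b m n' \<pi> j')"

definition is_partition :: "'a set set \<Rightarrow> 'a set \<Rightarrow> bool" where
  "is_partition \<pi> S \<longleftrightarrow> (\<Union>\<pi> = S) \<and> (\<forall>P\<in>\<pi>. P \<noteq> {}) \<and>
     (\<forall>P\<in>\<pi>. \<forall>Q\<in>\<pi>. P \<noteq> Q \<longrightarrow> P \<inter> Q = {})"

definition amenable :: "('a, 'b) monoid_scheme \<Rightarrow> bool" where
  "amenable G \<longleftrightarrow> (\<exists>\<mu> :: 'a set \<Rightarrow> real.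
     (\<forall>A \<subseteq> carrier G. \<mu> A \<ge> 0) \<and>
     \<mu> (carrier G) = 1 \<and>
     (\<forall>A B. A \<subseteq> carrier G \<longrightarrow> B \<subseteq> carrier G \<longrightarrow> A \<inter> B = {} \<longrightarrow> \<mu> (A \<union> B) = \<mu> A + \<mu> B) \<and>
     (\<forall>g \<in> carrier G. \<forall>A \<subseteq> carrier G. \<mu> ((\<lambda>x. g \<otimes>\<^bsub>G\<^esub> x) ` A) = \<mu> A))"

definition sofic :: "('a, 'b) monoid_scheme \<Rightarrow> bool" where
  "sofic G \<longleftrightarrow> (\<forall>F (\<epsilon>::real). finite F \<and> F \<subseteq> carrier G \<and> \<epsilon> > 0 \<longrightarrow>
     (\<exists>N::nat. N > 0 \<and> (\<exists>\<sigma> :: 'a \<Rightarrow> nat \<Rightarrow> nat.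
        (\<forall>g \<in> carrier G. bij_betw (\<sigma> g) {..<N} {..<N}) \<and>
        (\<forall>g \<in> F. \<forall>h \<in> F.
           real (card {x \<in> {..<N}. \<sigma> (g \<otimes>\<^bsub>G\<^esub> h) x \<noteq> \<sigma> g (\<sigma> h x)}) \<le> \<epsilon> * real N) \<and>
        (\<forall>g \<in> F. g \<noteq> \<one>\<^bsub>G\<^esub> \<longrightarrow>
           real (card {x \<in> {..<N}. \<sigma> g x = x}) \<le> \<epsilon> * real N))))"

end

theory Submission
  imports Defs
begin


lemma weq_cong: "weq m n' \<pi> u v \<Longrightarrow> weq m n' \<pi> (x@u@y) (x@v@y)"
proof (induction rule: weq.induct)
  case (refl w) show ?case by (rule weq.refl)
next
  case (sym u w) thus ?case using weq.sym by blast
next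
  case (trans u v w) thus ?case by (metis weq.trans)
next
  case (cancel z u e v)
  from weq.cancel[OF cancel(1), where u="x@u" and e=e and v="v@y" and \<pi>=\<pi>] show ?case by simp
next
  case (rel_a0 u v)
  from weq.rel_a0[of m n' \<pi> "x@u" "v@y"] show ?case by simp
next
  case (rel_b0 u v)
  from weq.rel_b0[of m n' \<pi> "x@u" "v@y"] show ?case by simp
next
  case (rel_block P i j i' j' u v)
  from weq.rel_block[OF rel_block, where u="x@u" and v="v@y" and m=m and n'=n'] show ?case by simp
qed

lemma weq_app: "weq m n' \<pi> u u' \<Longrightarrow> weq m n' \<pi> v v' \<Longrightarrow> weq m n' \<pi> (u@v) (u'@v')"
proof -
  assume a: "weq m n' \<pi> u u'" "weq m n' \<pi> v v'"
  have 1: "weq m n' \<pi> (u@v) (u'@v)" using weq_cong[OF a(1), of "[]" v] by simp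
  have 2: "weq m n' \<pi> (u'@v) (u'@v')" using weq_cong[OF a(2), of u' "[]"] by simp
  show ?thesis by (rule weq.trans[OF 1 2])
qed

lemma wclass_eq_iff: "wclass m n' \<pi> u = wclass m n' \<pi> v \<longleftrightarrow> weq m n' \<pi> u v"
proof
  assume "wclass m n' \<pi> u = wclass m n' \<pi> v"
  then have "v \<in> wclass m n' \<pi> u" by (simp add: wclass_def weq.refl)
  then show "weq m n' \<pi> u v" by (simp add: wclass_def)
next
  assume a: "weq m n' \<pi> u v"
  show "wclass m n' \<pi> u = wclass m n' \<pi> v" unfolding wclass_def
    using a weq.sym weq.trans by blast
qed

lemma in_wclass: "u \<in> wclass m n' \<pi> u"
  unfolding wclass_def by (simp add: weq.refl)

lemma some_wclass: "weq m n' \<pi> u (SOME x. x \<in> wclass m n' \<pi> u)"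
  using someI[of "\<lambda>x. x \<in> wclass m n' \<pi> u", OF in_wclass] unfolding wclass_def by simp

lemma mult_wclass:
  "wclass m n' \<pi> u \<otimes>\<^bsub>Gamma m n' \<pi>\<^esub> wclass m n' \<pi> v = wclass m n' \<pi> (u@v)"
  unfolding Gamma_def using weq_app[OF some_wclass some_wclass, of m n' \<pi> u v]
  by (simp add: wclass_eq_iff weq.sym)

definition winv :: "word \<Rightarrow> word" where
  "winv u = rev (map (\<lambda>(x,e). (x, \<not> e)) u)"

lemma winv_Cons: "winv (l#u) = winv u @ [(fst l, \<not> snd l)]"
  by (cases l) (simp add: winv_def)

lemma winv_valid: "list_all (\<lambda>(x, e). valid_gen m n' x) u \<Longrightarrow> list_all (\<lambda>(x, e). valid_gen m n' x) (winv u)"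
  by (induction u) (auto simp: winv_Cons winv_def)

lemma weq_inv_r: "list_all (\<lambda>(x, e). valid_gen m n' x) u \<Longrightarrow> weq m n' \<pi> (u @ winv u) []"
proof (induction u)
  case Nil then show ?case by (simp add: winv_def weq.refl)
next
  case (Cons l u)
  obtain x e where l: "l = (x,e)" by (cases l)
  have v: "valid_gen m n' x" using Cons l by simp
  have "weq m n' \<pi> ([l] @ (u @ winv u) @ [(x,\<not>e)]) ([l] @ [] @ [(x,\<not>e)])"
    using Cons by (intro weq_cong) simp
  moreover have "weq m n' \<pi> ([] @ [(x,e),(x,\<not>e)] @ []) ([] @ [])"
    by (rule weq.cancel[OF v])
  ultimately show ?case using l by (simp add: winv_Cons) (metis weq.trans)
qed

lemma weq_inv_l: "list_all (\<lambda>(x, e). valid_gen m n' x) u \<Longrightarrow> weq m n' \<pi> (winv u @ u) []"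
proof -
  assume a: "list_all (\<lambda>(x, e). valid_gen m n' x) u"
  have "winv (winv u) = u" by (simp add: winv_def rev_map comp_def case_prod_unfold)
  with weq_inv_r[OF winv_valid[OF a], of \<pi>] show ?thesis by simp
qed

lemma Gamma_group: "group (Gamma m n' \<pi>)"
proof (rule groupI)
  let ?G = "Gamma m n' \<pi>"
  let ?V = "list_all (\<lambda>(x, e). valid_gen m n' x)"
  show "\<one>\<^bsub>?G\<^esub> \<in> carrier ?G" unfolding Gamma_def by auto
  have one: "\<one>\<^bsub>?G\<^esub> = wclass m n' \<pi> []" by (simp add: Gamma_def)
  fix x y z assume x: "x \<in> carrier ?G" and y: "y \<in> carrier ?G" and z: "z \<in> carrier ?G"
  obtain u where u: "?V u" "x = wclass m n' \<pi> u" using x unfolding Gamma_def by auto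
  obtain v where v: "?V v" "y = wclass m n' \<pi> v" using y unfolding Gamma_def by auto
  obtain w where w: "?V w" "z = wclass m n' \<pi> w" using z unfolding Gamma_def by auto
  show "x \<otimes>\<^bsub>?G\<^esub> y \<in> carrier ?G" using u v
    by (simp add: mult_wclass) (auto simp: Gamma_def intro!: exI[of _ "u@v"])
  show "x \<otimes>\<^bsub>?G\<^esub> y \<otimes>\<^bsub>?G\<^esub> z = x \<otimes>\<^bsub>?G\<^esub> (y \<otimes>\<^bsub>?G\<^esub> z)"
    using u v w by (simp add: mult_wclass)
  show "\<one>\<^bsub>?G\<^esub> \<otimes>\<^bsub>?G\<^esub> x = x" using u
    by (simp only: one mult_wclass) simp
  show "\<exists>y\<in>carrier ?G. y \<otimes>\<^bsub>?G\<^esub> x = \<one>\<^bsub>?G\<^esub>"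
  proof
    show "wclass m n' \<pi> (winv u) \<in> carrier ?G" using winv_valid[OF u(1)]
      by (auto simp: Gamma_def)
    have "wclass m n' \<pi> (winv u @ u) = wclass m n' \<pi> []"
      using weq_inv_l[OF u(1), of \<pi>] by (simp only: wclass_eq_iff)
    then show "wclass m n' \<pi> (winv u) \<otimes>\<^bsub>?G\<^esub> x = \<one>\<^bsub>?G\<^esub>"
      using u(2) one by (simp add: mult_wclass)
  qed
qed


definition grid1 :: "nat \<Rightarrow> (nat \<times> nat) set" where
  "grid1 n = {1..2*n} \<times> {1..2*n}"

definition key :: "nat \<Rightarrow> nat \<times> nat \<Rightarrow> nat \<times> nat \<times> nat" where
  "key n c = ((fst c - 1) div 2, ((fst c - 1) mod 2 + (snd c - 1) div 2) mod n, (snd c - 1) mod 2)"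

definition piset :: "nat \<Rightarrow> (nat \<times> nat) set set" where
  "piset n = {{(0,0)}} \<union> {{(j,0),(0,j)} | j. 1 \<le> j \<and> j \<le> 2*n}
     \<union> {{c,d} | c d. c \<in> grid1 n \<and> d \<in> grid1 n \<and> c \<noteq> d \<and> key n c = key n d}"

fun gidx :: "gen \<Rightarrow> nat" where
  "gidx (GA j) = j" | "gidx (GB j) = j"

lemma funpow_mod:
  assumes "x \<in> T" "\<And>y. y \<in> T \<Longrightarrow> (f ^^ n) y = y"
  shows "(f ^^ k) x = (f ^^ (k mod n)) x"
proof -
  have pow: "(f ^^ (n*q)) y = y" if "y \<in> T" for q y
  proof (induction q)
    case 0 then show ?case by simp
  next
    case (Suc q)
    have "(f ^^ (n*Suc q)) y = (f ^^ n) ((f ^^ (n*q)) y)"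
      by (simp add: funpow_add mult.commute)
    then show ?case using Suc assms that by simp
  qed
  have "k = k mod n + n * (k div n)" by simp
  then have "(f ^^ k) x = (f ^^ (k mod n)) ((f ^^ (n * (k div n))) x)"
    by (metis funpow_add o_apply)
  then show ?thesis using pow assms by simp
qed

locale actsys =
  fixes n :: nat and T :: "'x set" and p pi w wi :: "'x \<Rightarrow> 'x"
  assumes pT: "x \<in> T \<Longrightarrow> p x \<in> T" and piT: "x \<in> T \<Longrightarrow> pi x \<in> T"
    and wT: "x \<in> T \<Longrightarrow> w x \<in> T" and wiT: "x \<in> T \<Longrightarrow> wi x \<in> T"
    and p_pi: "x \<in> T \<Longrightarrow> p (pi x) = x" and pi_p: "x \<in> T \<Longrightarrow> pi (p x) = x"
    and w_wi: "x \<in> T \<Longrightarrow> w (wi x) = x" and wi_w: "x \<in> T \<Longrightarrow> wi (w x) = x"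
    and p_n: "x \<in> T \<Longrightarrow> (p ^^ n) x = x"
begin

definition L :: "nat \<Rightarrow> bool \<Rightarrow> 'x \<Rightarrow> 'x" where
  "L j e = (if 1 \<le> j \<and> j \<le> 2*n then
     (if e then (p ^^ ((j-1) div 2)) \<circ> w \<circ> (p ^^ ((j-1) mod 2))
      else (pi ^^ ((j-1) mod 2)) \<circ> wi \<circ> (pi ^^ ((j-1) div 2))) else id)"

definition lact :: "gen \<times> bool \<Rightarrow> 'x \<Rightarrow> 'x" where
  "lact l = L (gidx (fst l)) (snd l)"

definition ev :: "word \<Rightarrow> 'x \<Rightarrow> 'x" where
  "ev u = foldr (\<lambda>l f. lact l \<circ> f) u id"

lemma ev_Nil[simp]: "ev [] = id" by (simp add: ev_def)
lemma ev_Cons[simp]: "ev (l#u) = lact l \<circ> ev u" by (simp add: ev_def)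
lemma ev_append[simp]: "ev (u@v) = ev u \<circ> ev v" by (induction u) auto

lemma powT: "x \<in> T \<Longrightarrow> (p ^^ k) x \<in> T" by (induction k) (auto intro: pT)
lemma pipowT: "x \<in> T \<Longrightarrow> (pi ^^ k) x \<in> T" by (induction k) (auto intro: piT)
lemma pi_p_pow: "x \<in> T \<Longrightarrow> (pi ^^ k) ((p ^^ k) x) = x"
proof (induction k arbitrary: x)
  case (Suc k)
  have e1: "(p ^^ Suc k) x = p ((p ^^ k) x)" by simp
  have e2: "(pi ^^ Suc k) y = (pi ^^ k) (pi y)" for y by (simp only: funpow_Suc_right o_apply)
  have "(pi ^^ Suc k) ((p ^^ Suc k) x) = (pi ^^ k) (pi (p ((p ^^ k) x)))"
    by (simp only: e1 e2)
  also have "\<dots> = x" using Suc powT pi_p by simp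
  finally show ?case .
qed simp
lemma p_pi_pow: "x \<in> T \<Longrightarrow> (p ^^ k) ((pi ^^ k) x) = x"
proof (induction k arbitrary: x)
  case (Suc k)
  have e1: "(pi ^^ Suc k) x = pi ((pi ^^ k) x)" by simp
  have e2: "(p ^^ Suc k) y = (p ^^ k) (p y)" for y by (simp only: funpow_Suc_right o_apply)
  have "(p ^^ Suc k) ((pi ^^ Suc k) x) = (p ^^ k) (p (pi ((pi ^^ k) x)))"
    by (simp only: e1 e2)
  also have "\<dots> = x" using Suc pipowT p_pi by simp
  finally show ?case .
qed simp

lemma LT: "x \<in> T \<Longrightarrow> L j e x \<in> T"
  by (auto simp: L_def intro!: powT pipowT wT wiT)
lemma lactT: "x \<in> T \<Longrightarrow> lact l x \<in> T" by (simp add: lact_def LT)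
lemma evT: "x \<in> T \<Longrightarrow> ev u x \<in> T" by (induction u) (auto intro: lactT)

lemma L_inv: "x \<in> T \<Longrightarrow> L j e (L j (\<not> e) x) = x"
  by (cases e) (auto simp: L_def pi_p_pow p_pi_pow wi_w w_wi powT pipowT wT wiT)

lemma lact_inv: "x \<in> T \<Longrightarrow> lact (y, e) (lact (y, \<not> e) x) = x"
  by (simp add: lact_def L_inv)

lemma pmod: "x \<in> T \<Longrightarrow> (p ^^ k) x = (p ^^ (k mod n)) x"
  using funpow_mod[where x=x and T=T and f=p and n=n and k=k] p_n by blast

definition F :: "nat \<times> nat \<times> nat \<Rightarrow> 'x \<Rightarrow> 'x" where
  "F k x = (p ^^ fst k) (w ((p ^^ fst (snd k)) (w ((p ^^ snd (snd k)) x))))"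

lemma cell_F:
  assumes c: "c \<in> grid1 n" and x: "x \<in> T"
  shows "lact (GA (fst c), True) (lact (GB (snd c), True) x) = F (key n c) x"
proof -
  obtain i j where ij: "c = (i,j)" by (cases c)
  have r: "1 \<le> i" "i \<le> 2*n" "1 \<le> j" "j \<le> 2*n" using c ij by (auto simp: grid1_def)
  let ?y = "w ((p ^^ ((j-1) mod 2)) x)"
  have yT: "?y \<in> T" using x by (intro wT powT)
  have "(p ^^ ((i-1) mod 2)) ((p ^^ ((j-1) div 2)) ?y) = (p ^^ ((i-1) mod 2 + (j-1) div 2)) ?y"
    by (simp add: funpow_add)
  also have "\<dots> = (p ^^ (((i-1) mod 2 + (j-1) div 2) mod n)) ?y" using pmod yT by blast
  finally have e: "(p ^^ ((i-1) mod 2)) ((p ^^ ((j-1) div 2)) ?y) = (p ^^ (((i-1) mod 2 + (j-1) div 2) mod n)) ?y" .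
  show ?thesis using r ij e by (simp add: lact_def L_def F_def key_def)
qed

lemma ev_respects:
  assumes "weq (2*n+1) (2*n+1) (piset n) u v" "x \<in> T"
  shows "ev u x = ev v x"
  using assms
proof (induction arbitrary: x rule: weq.induct)
  case (cancel z u e v)
  then show ?case using lact_inv[OF evT[OF cancel(2)], of z e] by simp
next
  case (rel_a0 u v) then show ?case by (simp add: lact_def L_def)
next
  case (rel_b0 u v) then show ?case by (simp add: lact_def L_def)
next
  case (rel_block P i j i' j' u v)
  have y: "ev v x \<in> T" using evT rel_block by blast
  have "lact (GA i, True) (lact (GB j, True) (ev v x)) = lact (GA i', True) (lact (GB j', True) (ev v x))"
  proof -
    consider (a) "P = {(0,0)}" | (b) jj where "P = {(jj,0),(0,jj)}" "1 \<le> jj" "jj \<le> 2*n"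
      | (c) c d where "P = {c,d}" "c \<in> grid1 n" "d \<in> grid1 n" "key n c = key n d"
      using rel_block(1) unfolding piset_def by blast
    then show ?thesis
    proof cases
      case a then show ?thesis using rel_block by auto
    next
      case b then show ?thesis using rel_block by (auto simp: lact_def L_def)
    next
      case c
      then have "(i,j) \<in> grid1 n" "(i',j') \<in> grid1 n" "key n (i,j) = key n (i',j')"
        using rel_block by auto
      then show ?thesis using cell_F[OF _ y] by (metis fst_conv snd_conv)
    qed
  qed
  then show ?case by simp
qed auto

end


type_synonym nf = "nat \<times> (int \<times> nat) list"

fun nfl :: "nat \<Rightarrow> (int \<times> nat) list \<Rightarrow> bool" where
  "nfl n [] = True"
| "nfl n [(k,i)] = (k \<noteq> 0 \<and> i < n)"
| "nfl n ((k,i)#(k',i')#L) = (k \<noteq> 0 \<and> 0 < i \<and> i < n \<and> nfl n ((k',i')#L))"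

definition Snf :: "nat \<Rightarrow> nf set" where
  "Snf n = {(i0,L). i0 < n \<and> nfl n L}"

fun act_p :: "nat \<Rightarrow> nf \<Rightarrow> nf" where
  "act_p n (i0,L) = (Suc i0 mod n, L)"

fun act_pi :: "nat \<Rightarrow> nf \<Rightarrow> nf" where
  "act_pi n (i0,L) = ((i0 + n - 1) mod n, L)"

fun act_w :: "nf \<Rightarrow> nf" where
  "act_w (i0, L) = (if i0 \<noteq> 0 then (0,(1,i0)#L) else (case L of [] \<Rightarrow> (0,[(1,0)])
     | (k,i)#L' \<Rightarrow> if k+1 = 0 then (i,L') else (0,(k+1,i)#L')))"

fun act_wi :: "nf \<Rightarrow> nf" where
  "act_wi (i0, L) = (if i0 \<noteq> 0 then (0,(-1,i0)#L) else (case L of [] \<Rightarrow> (0,[(-1,0)])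
     | (k,i)#L' \<Rightarrow> if k-1 = 0 then (i,L') else (0,(k-1,i)#L')))"

lemma nfl_Cons: "nfl n ((k,i)#L) \<longleftrightarrow> k \<noteq> 0 \<and> i < n \<and> nfl n L \<and> (L \<noteq> [] \<longrightarrow> 0 < i)"
  by (cases L) auto

lemma act_p_S: "x \<in> Snf n \<Longrightarrow> act_p n x \<in> Snf n"
  by (cases x) (auto simp: Snf_def)
lemma act_pi_S: "x \<in> Snf n \<Longrightarrow> act_pi n x \<in> Snf n"
  by (cases x) (auto simp: Snf_def)
lemma act_w_S: "x \<in> Snf n \<Longrightarrow> act_w x \<in> Snf n"
  by (cases x) (auto simp: Snf_def nfl_Cons split: list.splits)
lemma act_wi_S: "x \<in> Snf n \<Longrightarrow> act_wi x \<in> Snf n"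
  by (cases x) (auto simp: Snf_def nfl_Cons split: list.splits)
lemma act_p_pi: "x \<in> Snf n \<Longrightarrow> act_p n (act_pi n x) = x"
proof (cases x)
  case (Pair i0 L)
  assume "x \<in> Snf n"
  then have "i0 < n" using Pair by (simp add: Snf_def)
  then show ?thesis using Pair
    by (cases i0) (auto simp: mod_Suc_eq)
qed
lemma act_pi_p: "x \<in> Snf n \<Longrightarrow> act_pi n (act_p n x) = x"
proof (cases x)
  case (Pair i0 L)
  assume "x \<in> Snf n"
  then have "i0 < n" using Pair by (simp add: Snf_def)
  then show ?thesis using Pair
    by (cases "Suc i0 = n") (auto simp: mod_add_left_eq[symmetric])
qed
lemma act_w_wi: "x \<in> Snf n \<Longrightarrow> act_w (act_wi x) = x"
  by (cases x) (auto simp: Snf_def nfl_Cons split: list.splits)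
lemma act_wi_w: "x \<in> Snf n \<Longrightarrow> act_wi (act_w x) = x"
  by (cases x) (auto simp: Snf_def nfl_Cons split: list.splits)

lemma act_p_pow: "i0 < n \<Longrightarrow> (act_p n ^^ k) (i0, L) = ((i0 + k) mod n, L)"
  by (induction k) (auto simp: mod_Suc_eq)

lemma act_p_n: "x \<in> Snf n \<Longrightarrow> (act_p n ^^ n) x = x"
  by (cases x) (auto simp: Snf_def act_p_pow)

lemma actsys_S: "actsys n (Snf n) (act_p n) (act_pi n) act_w act_wi"
  by unfold_locales (auto intro: act_p_S act_pi_S act_w_S act_wi_S act_p_pi act_pi_p act_w_wi act_wi_w act_p_n)


definition idx :: "nat \<Rightarrow> nat \<Rightarrow> nat" where "idx a b = 2*a + b + 1"

lemma key_idx: "b < 2 \<Longrightarrow> d < 2 \<Longrightarrow> key n (idx a b, idx g d) = (a, (b + g) mod n, d)"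
  by (simp add: key_def idx_def)

lemma idx_grid: "a < n \<Longrightarrow> b < 2 \<Longrightarrow> g < n \<Longrightarrow> d < 2 \<Longrightarrow> (idx a b, idx g d) \<in> grid1 n"
  by (auto simp: grid1_def idx_def)

definition GG :: "nat \<Rightarrow> word set monoid" where "GG n = Gamma (2*n+1) (2*n+1) (piset n)"
definition wcn :: "nat \<Rightarrow> word \<Rightarrow> word set" where "wcn n = wclass (2*n+1) (2*n+1) (piset n)"
definition weqn :: "nat \<Rightarrow> word \<Rightarrow> word \<Rightarrow> bool" where "weqn n = weq (2*n+1) (2*n+1) (piset n)"
definition validn :: "nat \<Rightarrow> word \<Rightarrow> bool" where "validn n = list_all (\<lambda>(x, e). valid_gen (2*n+1) (2*n+1) x)"

lemma mult_wcn: "wcn n u \<otimes>\<^bsub>GG n\<^esub> wcn n v = wcn n (u@v)"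
  unfolding GG_def wcn_def by (rule mult_wclass)
lemma wcn_eq_iff: "wcn n u = wcn n v \<longleftrightarrow> weqn n u v"
  unfolding weqn_def wcn_def by (rule wclass_eq_iff)
lemma carrier_GG: "carrier (GG n) = {wcn n u | u. validn n u}"
  unfolding GG_def wcn_def validn_def Gamma_def by simp
lemma one_GG: "\<one>\<^bsub>GG n\<^esub> = wcn n []"
  unfolding GG_def wcn_def Gamma_def by simp

locale gam =
  fixes n :: nat
  assumes n2: "2 \<le> n"
begin

abbreviation "G \<equiv> GG n"
abbreviation "wc \<equiv> wcn n"

sublocale group G unfolding GG_def by (rule Gamma_group)
sublocale SA: actsys n "Snf n" "act_p n" "act_pi n" act_w act_wi by (rule actsys_S)

definition A :: "nat \<Rightarrow> word set" where "A j = wc [(GA j, True)]"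
definition B :: "nat \<Rightarrow> word set" where "B j = wc [(GB j, True)]"

lemma wc_carrier: "validn n u \<Longrightarrow> wc u \<in> carrier G"
  by (auto simp: carrier_GG)

lemma A_carrier: "j \<le> 2*n \<Longrightarrow> A j \<in> carrier G"
  unfolding A_def by (rule wc_carrier) (simp add: validn_def)
lemma B_carrier: "j \<le> 2*n \<Longrightarrow> B j \<in> carrier G"
  unfolding B_def by (rule wc_carrier) (simp add: validn_def)

lemma one_wc: "\<one>\<^bsub>G\<^esub> = wc []" by (simp add: one_GG)

lemma A0: "A 0 = \<one>\<^bsub>G\<^esub>"
  unfolding A_def one_wc wcn_eq_iff weqn_def using weq.rel_a0[of _ _ _ "[]" "[]"] by simp
lemma B0: "B 0 = \<one>\<^bsub>G\<^esub>"
  unfolding B_def one_wc wcn_eq_iff weqn_def using weq.rel_b0[of _ _ _ "[]" "[]"] by simp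

lemma wc_Cons: "wc (l#u) = wc [l] \<otimes>\<^bsub>G\<^esub> wc u"
  by (simp add: mult_wcn)

lemma AB_block: "P \<in> piset n \<Longrightarrow> (i,j) \<in> P \<Longrightarrow> (i',j') \<in> P \<Longrightarrow> A i \<otimes>\<^bsub>G\<^esub> B j = A i' \<otimes>\<^bsub>G\<^esub> B j'"
  unfolding A_def B_def mult_wcn wcn_eq_iff weqn_def
  using weq.rel_block[of P "piset n" i j i' j' "2*n+1" "2*n+1" "[]" "[]"] by simp

lemma A_eq_B: assumes "1 \<le> j" "j \<le> 2*n" shows "A j = B j"
proof -
  have "{(j,0),(0,j)} \<in> piset n" using assms by (auto simp: piset_def)
  from AB_block[OF this] have "A j \<otimes>\<^bsub>G\<^esub> B 0 = A 0 \<otimes>\<^bsub>G\<^esub> B j" by simp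
  then show ?thesis using A_carrier B_carrier assms by (simp add: A0 B0)
qed

lemma cell_rel:
  assumes "c \<in> grid1 n" "d \<in> grid1 n" "key n c = key n d"
  shows "A (fst c) \<otimes>\<^bsub>G\<^esub> B (snd c) = A (fst d) \<otimes>\<^bsub>G\<^esub> B (snd d)"
proof (cases "c = d")
  case False
  then have "{c,d} \<in> piset n" using assms unfolding piset_def by blast
  from AB_block[OF this, of "fst c" "snd c" "fst d" "snd d"] show ?thesis by simp
qed simp

abbreviation "X a \<equiv> A (idx a 0)"
abbreviation "Y a \<equiv> A (idx a 1)"
definition "P = inv\<^bsub>G\<^esub> (X 0) \<otimes>\<^bsub>G\<^esub> Y 0"
definition "W = X 0"

lemma Aidx_carrier: "a < n \<Longrightarrow> b < 2 \<Longrightarrow> A (idx a b) \<in> carrier G"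
  by (rule A_carrier) (simp add: idx_def)

lemma E2:
  assumes "a < n" "g < n" "d < 2"
  shows "X a \<otimes>\<^bsub>G\<^esub> A (idx g d) = Y a \<otimes>\<^bsub>G\<^esub> A (idx ((g+n-1) mod n) d)"
proof -
  have g': "(g+n-1) mod n < n" using n2 by simp
  have ar: "(1 + (g+n-1) mod n) mod n = g"
  proof -
    have "(1 + (g+n-1) mod n) mod n = (1 + (g+n-1)) mod n" by (simp add: mod_Suc_eq)
    also have "1 + (g+n-1) = g + n" using n2 by simp
    finally show ?thesis using assms by simp
  qed
  have k: "key n (idx a 0, idx g d) = key n (idx a 1, idx ((g+n-1) mod n) d)"
    using assms by (simp only: key_idx ar) simp
  from cell_rel[OF idx_grid idx_grid k] assms g'
  have "X a \<otimes>\<^bsub>G\<^esub> B (idx g d) = Y a \<otimes>\<^bsub>G\<^esub> B (idx ((g+n-1) mod n) d)" by simp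
  moreover have "B (idx g d) = A (idx g d)"
    by (rule A_eq_B[symmetric]) (use assms in \<open>auto simp: idx_def\<close>)
  moreover have "B (idx ((g+n-1) mod n) d) = A (idx ((g+n-1) mod n) d)"
  proof (rule A_eq_B[symmetric])
    have "(g+n-1) mod n < n" by (rule g')
    then show "idx ((g+n-1) mod n) d \<le> 2*n" using assms unfolding idx_def by linarith
  qed (simp add: idx_def)
  ultimately show ?thesis by simp
qed

lemma grp_aux:
  assumes "x \<in> carrier G" "y \<in> carrier G" "z \<in> carrier G" "z' \<in> carrier G"
    and "x \<otimes>\<^bsub>G\<^esub> z = y \<otimes>\<^bsub>G\<^esub> z'"
  shows "inv\<^bsub>G\<^esub> x \<otimes>\<^bsub>G\<^esub> y = z \<otimes>\<^bsub>G\<^esub> inv\<^bsub>G\<^esub> z'"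
proof -
  have "x \<otimes>\<^bsub>G\<^esub> (z \<otimes>\<^bsub>G\<^esub> inv\<^bsub>G\<^esub> z') = (x \<otimes>\<^bsub>G\<^esub> z) \<otimes>\<^bsub>G\<^esub> inv\<^bsub>G\<^esub> z'"
    using assms(1-4) by (simp add: m_assoc)
  also have "\<dots> = (y \<otimes>\<^bsub>G\<^esub> z') \<otimes>\<^bsub>G\<^esub> inv\<^bsub>G\<^esub> z'" using assms(5) by simp
  also have "\<dots> = y" using assms(1-4) by (simp add: m_assoc)
  finally have eq: "x \<otimes>\<^bsub>G\<^esub> (z \<otimes>\<^bsub>G\<^esub> inv\<^bsub>G\<^esub> z') = y" .
  show ?thesis using eq assms inv_solve_left'[of "z \<otimes>\<^bsub>G\<^esub> inv\<^bsub>G\<^esub> z'" x y] by auto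
qed

lemma rel_i:
  assumes "a < n" "g < n" "d < 2"
  shows "inv\<^bsub>G\<^esub> (X a) \<otimes>\<^bsub>G\<^esub> Y a = A (idx g d) \<otimes>\<^bsub>G\<^esub> inv\<^bsub>G\<^esub> (A (idx ((g+n-1) mod n) d))"
  using n2 assms by (intro grp_aux E2 Aidx_carrier) auto

lemma P_carrier: "P \<in> carrier G" unfolding P_def using n2
  by (intro m_closed inv_closed Aidx_carrier) auto
lemma W_carrier: "W \<in> carrier G" unfolding W_def using n2 by (intro Aidx_carrier) auto

lemma XY: "a < n \<Longrightarrow> inv\<^bsub>G\<^esub> (X a) \<otimes>\<^bsub>G\<^esub> Y a = P"
  unfolding P_def using rel_i[of a 0 0] rel_i[of 0 0 0] n2 by simp

lemma shiftA: assumes "g < n" "d < 2" shows "A (idx g d) = P \<otimes>\<^bsub>G\<^esub> A (idx ((g+n-1) mod n) d)"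
proof -
  have c: "A (idx ((g+n-1) mod n) d) \<in> carrier G" using n2 assms by (intro Aidx_carrier) auto
  have "P = A (idx g d) \<otimes>\<^bsub>G\<^esub> inv\<^bsub>G\<^esub> (A (idx ((g+n-1) mod n) d))"
    using XY[of 0] rel_i[of 0 g d] assms n2 by simp
  then show ?thesis using c assms P_carrier Aidx_carrier by (subst (asm) inv_solve_right) auto
qed

lemma Y_eq: assumes "a < n" shows "Y a = X a \<otimes>\<^bsub>G\<^esub> P"
proof -
  have c: "X a \<in> carrier G" "Y a \<in> carrier G" using assms by (auto intro: Aidx_carrier)
  show ?thesis using XY[OF assms] P_carrier c inv_solve_left'[of P "X a" "Y a"] by auto
qed

end


context gam
begin

lemma pow_Suc_left: "x \<in> carrier G \<Longrightarrow> z \<in> carrier G \<Longrightarrow>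
   x [^]\<^bsub>G\<^esub> Suc k \<otimes>\<^bsub>G\<^esub> z = x \<otimes>\<^bsub>G\<^esub> (x [^]\<^bsub>G\<^esub> k \<otimes>\<^bsub>G\<^esub> z)"
  by (simp only: nat_pow_Suc2) (simp add: m_assoc)

lemma A_pow: "g < n \<Longrightarrow> d < 2 \<Longrightarrow> A (idx g d) = P [^]\<^bsub>G\<^esub> g \<otimes>\<^bsub>G\<^esub> A (idx 0 d)"
proof (induction g)
  case 0 then show ?case using n2 by (simp add: Aidx_carrier)
next
  case (Suc g)
  have ar: "(Suc g + n - 1) mod n = g" using Suc.prems by simp
  have "A (idx (Suc g) d) = P \<otimes>\<^bsub>G\<^esub> A (idx g d)" using shiftA[OF Suc.prems] ar by simp
  also have "\<dots> = P \<otimes>\<^bsub>G\<^esub> (P [^]\<^bsub>G\<^esub> g \<otimes>\<^bsub>G\<^esub> A (idx 0 d))" using Suc by simp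
  also have "\<dots> = P [^]\<^bsub>G\<^esub> Suc g \<otimes>\<^bsub>G\<^esub> A (idx 0 d)"
    using P_carrier Aidx_carrier[of 0 d] Suc.prems n2 by (simp only: pow_Suc_left)
  finally show ?case .
qed

lemma P_n: "P [^]\<^bsub>G\<^esub> n = \<one>\<^bsub>G\<^esub>"
proof -
  have c: "A (idx 0 0) \<in> carrier G" using n2 by (intro Aidx_carrier) auto
  have ar: "(0 + n - 1) mod n = n - 1" using n2 by simp
  have "A (idx 0 0) = P \<otimes>\<^bsub>G\<^esub> A (idx (n-1) 0)" using shiftA[of 0 0] n2 ar by simp
  also have "\<dots> = P \<otimes>\<^bsub>G\<^esub> (P [^]\<^bsub>G\<^esub> (n-1) \<otimes>\<^bsub>G\<^esub> A (idx 0 0))" using A_pow[of "n-1" 0] n2 by simp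
  also have "\<dots> = P [^]\<^bsub>G\<^esub> Suc (n-1) \<otimes>\<^bsub>G\<^esub> A (idx 0 0)"
    using P_carrier c by (simp only: pow_Suc_left)
  also have "Suc (n-1) = n" using n2 by simp
  finally have "A (idx 0 0) = P [^]\<^bsub>G\<^esub> n \<otimes>\<^bsub>G\<^esub> A (idx 0 0)" .
  then show ?thesis using c P_carrier by simp
qed

lemma P_pow_mod: "P [^]\<^bsub>G\<^esub> k = P [^]\<^bsub>G\<^esub> (k mod n)"
proof -
  have "P [^]\<^bsub>G\<^esub> k = P [^]\<^bsub>G\<^esub> (k mod n + n * (k div n))" by simp
  also have "\<dots> = P [^]\<^bsub>G\<^esub> (k mod n) \<otimes>\<^bsub>G\<^esub> (P [^]\<^bsub>G\<^esub> n) [^]\<^bsub>G\<^esub> (k div n)"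
    using P_carrier by (simp only: nat_pow_mult[symmetric] nat_pow_pow)
  also have "\<dots> = P [^]\<^bsub>G\<^esub> (k mod n)" using P_carrier by (simp add: P_n)
  finally show ?thesis .
qed

lemma X_eq: "a < n \<Longrightarrow> X a = P [^]\<^bsub>G\<^esub> a \<otimes>\<^bsub>G\<^esub> W"
  using A_pow[of a 0] by (simp add: W_def)

lemma Y_eq2: "a < n \<Longrightarrow> Y a = P [^]\<^bsub>G\<^esub> a \<otimes>\<^bsub>G\<^esub> (W \<otimes>\<^bsub>G\<^esub> P)"
  using Y_eq[of a] X_eq[of a] P_carrier W_carrier by (simp add: m_assoc)

primrec psiL :: "(int \<times> nat) list \<Rightarrow> word set" where
  "psiL [] = \<one>\<^bsub>G\<^esub>"
| "psiL (c#L) = W [^]\<^bsub>G\<^esub> (fst c) \<otimes>\<^bsub>G\<^esub> (P [^]\<^bsub>G\<^esub> (snd c) \<otimes>\<^bsub>G\<^esub> psiL L)"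

definition psi :: "nf \<Rightarrow> word set" where
  "psi x = P [^]\<^bsub>G\<^esub> (fst x) \<otimes>\<^bsub>G\<^esub> psiL (snd x)"

lemma psiL_carrier[simp]: "psiL L \<in> carrier G"
  by (induction L) (auto intro: W_carrier P_carrier)

lemma psi_carrier[simp]: "psi x \<in> carrier G"
  by (simp add: psi_def P_carrier)

lemma psi_P: "x \<in> Snf n \<Longrightarrow> P \<otimes>\<^bsub>G\<^esub> psi x = psi (act_p n x)"
proof (cases x)
  case (Pair i0 L)
  have "P \<otimes>\<^bsub>G\<^esub> psi x = P [^]\<^bsub>G\<^esub> (Suc i0) \<otimes>\<^bsub>G\<^esub> psiL L"
    using Pair by (simp only: psi_def fst_conv snd_conv pow_Suc_left[OF P_carrier psiL_carrier])
  also have "\<dots> = psi (act_p n x)" using Pair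
    by (simp only: psi_def act_p.simps fst_conv snd_conv P_pow_mod[of "Suc i0"])
  finally show ?thesis .
qed

lemma Wk_mult: "z \<in> carrier G \<Longrightarrow> W \<otimes>\<^bsub>G\<^esub> (W [^]\<^bsub>G\<^esub> (k::int) \<otimes>\<^bsub>G\<^esub> z) = W [^]\<^bsub>G\<^esub> (1+k) \<otimes>\<^bsub>G\<^esub> z"
  using W_carrier by (simp add: int_pow_mult m_assoc)

lemma psi_W: assumes "x \<in> Snf n" shows "W \<otimes>\<^bsub>G\<^esub> psi x = psi (act_w x)"
proof -
  obtain i0 L where x: "x = (i0, L)" by (cases x)
  have nf: "nfl n L" using assms x by (simp add: Snf_def)
  consider (a) "i0 \<noteq> 0" | (b) "i0 = 0" "L = []" | (c) k i L' where "i0 = 0" "L = (k,i)#L'"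
    by (cases L) auto
  then show ?thesis
  proof cases
    case a then show ?thesis using x W_carrier P_carrier by (simp add: psi_def m_assoc)
  next
    case b then show ?thesis using x W_carrier P_carrier by (simp add: psi_def)
  next
    case c
    have "W \<otimes>\<^bsub>G\<^esub> psi x = W [^]\<^bsub>G\<^esub> (1+k) \<otimes>\<^bsub>G\<^esub> (P [^]\<^bsub>G\<^esub> i \<otimes>\<^bsub>G\<^esub> psiL L')"
      using c x P_carrier W_carrier by (simp add: psi_def Wk_mult)
    then show ?thesis using c x P_carrier W_carrier by (auto simp: psi_def add.commute)
  qed
qed

lemma psi_Ppow: "x \<in> Snf n \<Longrightarrow> P [^]\<^bsub>G\<^esub> k \<otimes>\<^bsub>G\<^esub> psi x = psi ((act_p n ^^ k) x)"
proof (induction k)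
  case 0 then show ?case by simp
next
  case (Suc k)
  have "P [^]\<^bsub>G\<^esub> Suc k \<otimes>\<^bsub>G\<^esub> psi x = P \<otimes>\<^bsub>G\<^esub> (P [^]\<^bsub>G\<^esub> k \<otimes>\<^bsub>G\<^esub> psi x)"
    by (rule pow_Suc_left[OF P_carrier psi_carrier])
  also have "\<dots> = psi ((act_p n ^^ Suc k) x)" using Suc SA.powT psi_P by simp
  finally show ?case .
qed

lemma A_psi: assumes "1 \<le> j" "j \<le> 2*n" "x \<in> Snf n"
  shows "A j \<otimes>\<^bsub>G\<^esub> psi x = psi (SA.lact (GA j, True) x)"
proof -
  define a where "a = (j-1) div 2"
  define b where "b = (j-1) mod 2"
  have j: "j = idx a b" using assms unfolding a_def b_def idx_def by simp
  have a: "a < n" using assms unfolding a_def by simp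
  have b: "b < 2" unfolding b_def by simp
  have Aj: "A j = P [^]\<^bsub>G\<^esub> a \<otimes>\<^bsub>G\<^esub> (W \<otimes>\<^bsub>G\<^esub> P [^]\<^bsub>G\<^esub> b)"
  proof (cases "b = 0")
    case True then show ?thesis using j X_eq[OF a] W_carrier by simp
  next
    case False then have "b = 1" using b by simp
    then show ?thesis using j Y_eq2[OF a] P_carrier by simp
  qed
  have "A j \<otimes>\<^bsub>G\<^esub> psi x = P [^]\<^bsub>G\<^esub> a \<otimes>\<^bsub>G\<^esub> (W \<otimes>\<^bsub>G\<^esub> (P [^]\<^bsub>G\<^esub> b \<otimes>\<^bsub>G\<^esub> psi x))"
    using Aj P_carrier W_carrier by (simp add: m_assoc)
  also have "\<dots> = psi ((act_p n ^^ a) (act_w ((act_p n ^^ b) x)))"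
    using assms(3) by (simp add: psi_Ppow psi_W SA.powT act_w_S)
  also have "\<dots> = psi (SA.lact (GA j, True) x)"
    using assms unfolding SA.lact_def SA.L_def a_def b_def by simp
  finally show ?thesis .
qed

lemma wc_inv: "validn n [(y,True)] \<Longrightarrow> wc [(y,False)] = inv\<^bsub>G\<^esub> (wc [(y,True)])"
proof -
  assume v: "validn n [(y,True)]"
  have "weqn n ([] @ [(y,False),(y,\<not>False)] @ []) ([] @ [])"
    unfolding weqn_def by (rule weq.cancel) (use v in \<open>simp add: validn_def\<close>)
  then have "wc [(y,False)] \<otimes>\<^bsub>G\<^esub> wc [(y,True)] = \<one>\<^bsub>G\<^esub>"
    by (simp add: mult_wcn wcn_eq_iff one_GG)
  moreover have "wc [(y,False)] \<in> carrier G" "wc [(y,True)] \<in> carrier G"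
    using v by (auto intro!: wc_carrier simp: validn_def)
  ultimately show ?thesis by (simp add: inv_equality)
qed

lemma letter_T: assumes "validn n [(y,True)]" "x \<in> Snf n"
  shows "wc [(y,True)] \<otimes>\<^bsub>G\<^esub> psi x = psi (SA.lact (y, True) x)"
proof (cases y)
  case (GA j)
  show ?thesis
  proof (cases "j = 0")
    case True then show ?thesis using GA A0 by (simp add: A_def[symmetric] SA.lact_def SA.L_def)
  next
    case False then show ?thesis using GA assms A_psi[of j x] by (simp add: A_def validn_def)
  qed
next
  case (GB j)
  show ?thesis
  proof (cases "j = 0")
    case True then show ?thesis using GB B0 by (simp add: B_def[symmetric] SA.lact_def SA.L_def)
  next
    case False
    then have "wc [(y,True)] = A j" using GB assms A_eq_B[of j] by (simp add: B_def validn_def)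
    then show ?thesis using False GB assms A_psi[of j x] by (simp add: validn_def SA.lact_def)
  qed
qed

lemma letter: assumes "validn n [l]" "x \<in> Snf n"
  shows "wc [l] \<otimes>\<^bsub>G\<^esub> psi x = psi (SA.lact l x)"
proof -
  obtain y e where l: "l = (y,e)" by (cases l)
  have v: "validn n [(y,True)]" using assms l by (simp add: validn_def)
  show ?thesis
  proof (cases e)
    case True then show ?thesis using letter_T v assms l by simp
  next
    case False
    have c: "wc [(y,True)] \<in> carrier G" using v by (rule wc_carrier)
    have lx: "SA.lact (y,False) x \<in> Snf n" using assms(2) by (rule SA.lactT)
    have "wc [(y,True)] \<otimes>\<^bsub>G\<^esub> psi (SA.lact (y,False) x) = psi x"
      using letter_T[OF v lx] SA.lact_inv[OF assms(2), of y True] by simp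
    then have "psi (SA.lact (y,False) x) = inv\<^bsub>G\<^esub> (wc [(y,True)]) \<otimes>\<^bsub>G\<^esub> psi x"
      using c by (metis inv_solve_left psi_carrier)
    then show ?thesis using False l wc_inv[OF v] by simp
  qed
qed

lemma e_S: "(0, []) \<in> Snf n" using n2 by (simp add: Snf_def)

lemma wc_psi: "validn n u \<Longrightarrow> wc u = psi (SA.ev u (0,[]))"
proof (induction u)
  case Nil then show ?case by (simp add: psi_def one_GG[symmetric])
next
  case (Cons l u)
  have vl: "validn n [l]" and vu: "validn n u" using Cons.prems by (auto simp: validn_def)
  have "wc (l#u) = wc [l] \<otimes>\<^bsub>G\<^esub> wc u" by (rule wc_Cons)
  also have "\<dots> = psi (SA.lact l (SA.ev u (0,[])))"
    using Cons.IH[OF vu] letter[OF vl SA.evT[OF e_S]] by simp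
  finally show ?case by simp
qed

end


context gam
begin

definition Phi :: "word set \<Rightarrow> nf" where
  "Phi Z = SA.ev (SOME u. u \<in> Z) (0,[])"

lemma Phi_wc: "Phi (wc u) = SA.ev u (0,[])"
proof -
  have "weq (2*n+1) (2*n+1) (piset n) u (SOME x. x \<in> wc u)"
    unfolding wcn_def by (rule some_wclass)
  then show ?thesis unfolding Phi_def using SA.ev_respects[OF _ e_S] by metis
qed

lemma carrier_wc: "Z \<in> carrier G \<Longrightarrow> \<exists>u. validn n u \<and> Z = wc u"
  by (auto simp: carrier_GG)

lemma Phi_S: "Z \<in> carrier G \<Longrightarrow> Phi Z \<in> Snf n"
  using carrier_wc Phi_wc SA.evT e_S by metis

lemma Phi_mult: "Z \<in> carrier G \<Longrightarrow> Phi (wc u \<otimes>\<^bsub>G\<^esub> Z) = SA.ev u (Phi Z)"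
  using carrier_wc by (metis Phi_wc SA.ev_append comp_apply mult_wcn)

lemma Phi_one: "Z \<in> carrier G \<Longrightarrow> Phi Z = (0,[]) \<Longrightarrow> Z = \<one>\<^bsub>G\<^esub>"
proof -
  assume Z: "Z \<in> carrier G" and e: "Phi Z = (0,[])"
  obtain u where u: "validn n u" "Z = wc u" using carrier_wc[OF Z] by blast
  have "SA.ev u (0,[]) = (0,[])" using e u(2) Phi_wc by simp
  then have "Z = psi (0,[])" using wc_psi[OF u(1)] u(2) by simp
  then show ?thesis by (simp add: psi_def)
qed

lemma lact_e: assumes "j \<le> 2*n"
  shows "SA.lact (GA j, True) (0,[]) = (if j = 0 then (0,[]) else ((j-1) div 2, [(1, (j-1) mod 2)]))"
proof (cases "j = 0")
  case False
  have b: "(j-1) mod 2 < n" using n2 by (meson less_le_trans mod_less_divisor pos2)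
  have a: "(j-1) div 2 < n" using assms False by simp
  have "(act_p n ^^ ((j - 1) mod 2)) (0, []) = ((j-1) mod 2, [])"
    using b n2 by (simp add: act_p_pow)
  moreover have "act_w ((j-1) mod 2, []) = (0, [(1, (j-1) mod 2)])" by simp
  moreover have "(act_p n ^^ ((j - 1) div 2)) (0, [(1, (j-1) mod 2)]) = ((j-1) div 2, [(1, (j-1) mod 2)])"
    using a n2 by (simp add: act_p_pow)
  ultimately show ?thesis using False assms by (simp add: SA.lact_def SA.L_def)
qed (simp add: SA.lact_def SA.L_def)

lemma lact_e_inj: assumes "i \<le> 2*n" "i' \<le> 2*n" "i \<noteq> i'"
  shows "SA.lact (GA i, True) (0,[]) \<noteq> SA.lact (GA i', True) (0,[])"
proof -
  have "i = (if i = 0 then 0 else 2 * ((i-1) div 2) + (i-1) mod 2 + 1)" by simp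
  moreover have "i' = (if i' = 0 then 0 else 2 * ((i'-1) div 2) + (i'-1) mod 2 + 1)" by simp
  ultimately show ?thesis using assms lact_e[of i] lact_e[of i'] by (auto split: if_splits) (metis div_mult_mod_eq)
qed

lemma nondeg: "nondegenerate (2*n+1) (2*n+1) (piset n)"
proof -
  have a: "gen_a (2*n+1) (2*n+1) (piset n) i = A i" for i by (simp add: gen_a_def A_def wcn_def)
  have b: "gen_b (2*n+1) (2*n+1) (piset n) i = B i" for i by (simp add: gen_b_def B_def wcn_def)
  have PA: "Phi (A i) = SA.lact (GA i, True) (0,[])" for i
    using Phi_wc[of "[(GA i, True)]"] by (simp add: A_def)
  have PB: "Phi (B i) = SA.lact (GA i, True) (0,[])" for i
    using Phi_wc[of "[(GB i, True)]"] by (simp add: B_def SA.lact_def)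
  show ?thesis unfolding nondegenerate_def a b
    using PA PB lact_e_inj by (metis Suc_eq_plus1 less_Suc_eq_le)
qed

end


context gam
begin

definition "Wp = {x \<in> Snf n. fst x = 0 \<and> snd x \<noteq> [] \<and> fst (hd (snd x)) > 0}"
definition "Wm = {x \<in> Snf n. fst x = 0 \<and> snd x \<noteq> [] \<and> fst (hd (snd x)) < 0}"
definition "Vp = {x \<in> Snf n. fst x = 1 \<and> snd x \<noteq> [] \<and> fst (hd (snd x)) > 0}"
definition "Vm = {x \<in> Snf n. fst x = 1 \<and> snd x \<noteq> [] \<and> fst (hd (snd x)) < 0}"

lemma pingW: assumes "x \<in> Snf n" "x \<notin> Wm" shows "act_w x \<in> Wp"
proof -
  obtain i0 L where x: "x = (i0,L)" by (cases x)
  have S: "act_w x \<in> Snf n" using assms(1) by (rule act_w_S)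
  show ?thesis
  proof (cases "i0 = 0")
    case False then show ?thesis using S x by (simp add: Wp_def)
  next
    case True
    show ?thesis
    proof (cases L)
      case Nil then show ?thesis using S x True by (simp add: Wp_def)
    next
      case (Cons c L')
      obtain k i where c: "c = (k,i)" by (cases c)
      have "k \<noteq> 0" using assms(1) x Cons c by (simp add: Snf_def nfl_Cons)
      moreover have "\<not> k < 0" using assms x Cons c True by (simp add: Wm_def)
      ultimately have "k > 0" by simp
      then show ?thesis using S x Cons c True by (simp add: Wp_def)
    qed
  qed
qed

lemma p_WV: "y \<in> Wp \<Longrightarrow> act_p n y \<in> Vp"
  using n2 act_p_S[of y n] by (cases y) (simp add: Wp_def Vp_def)

lemma pingV: assumes "x \<in> Snf n" "x \<notin> Vm" shows "act_p n (act_w (act_pi n x)) \<in> Vp"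
proof -
  obtain i0 L where x: "x = (i0,L)" by (cases x)
  have i0: "i0 < n" using assms x by (simp add: Snf_def)
  have S: "act_pi n x \<in> Snf n" using assms by (intro act_pi_S)
  have "act_pi n x \<notin> Wm"
  proof (cases "i0 = 1")
    case True
    then have "act_pi n x = (0, L)" using x n2 by simp
    then show ?thesis using assms x True by (simp add: Wm_def Vm_def)
  next
    case False
    have ne: "(i0 + n - 1) mod n \<noteq> 0"
    proof (cases "i0 = 0")
      case True then show ?thesis using n2 by simp
    next
      case f: False
      have e1: "i0 + n - 1 = (i0 - 1) + n" using f by simp
      have e2: "((i0 - 1) + n) mod n = i0 - 1" using i0 by simp
      have "(i0 + n - 1) mod n = i0 - 1" unfolding e1 e2 ..
      then show ?thesis using f False by simp
    qed
    then show ?thesis using x by (simp add: Wm_def)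
  qed
  then show ?thesis by (rule p_WV[OF pingW[OF S]])
qed

lemma not_amenable: "\<not> amenable G"
proof
  assume "amenable G"
  then obtain \<mu> :: "word set set \<Rightarrow> real" where H:
     "(\<forall>A \<subseteq> carrier G. \<mu> A \<ge> 0) \<and>
     \<mu> (carrier G) = 1 \<and>
     (\<forall>A B. A \<subseteq> carrier G \<longrightarrow> B \<subseteq> carrier G \<longrightarrow> A \<inter> B = {} \<longrightarrow> \<mu> (A \<union> B) = \<mu> A + \<mu> B) \<and>
     (\<forall>g \<in> carrier G. \<forall>A \<subseteq> carrier G. \<mu> ((\<lambda>x. g \<otimes>\<^bsub>G\<^esub> x) ` A) = \<mu> A)"
    unfolding amenable_def by (elim exE) (erule that)
  have pos: "\<And>A. A \<subseteq> carrier G \<Longrightarrow> \<mu> A \<ge> 0" using H by simp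
  have tot: "\<mu> (carrier G) = 1" using H by simp
  have add: "\<And>A B. A \<subseteq> carrier G \<Longrightarrow> B \<subseteq> carrier G \<Longrightarrow> A \<inter> B = {} \<Longrightarrow> \<mu> (A \<union> B) = \<mu> A + \<mu> B"
    using H by simp
  have inv: "\<And>g A. g \<in> carrier G \<Longrightarrow> A \<subseteq> carrier G \<Longrightarrow> \<mu> ((\<lambda>x. g \<otimes>\<^bsub>G\<^esub> x) ` A) = \<mu> A"
    using H by simp
  have mono: "\<mu> A \<le> \<mu> B" if "A \<subseteq> B" "B \<subseteq> carrier G" for A B
  proof -
    have "B = A \<union> (B - A)" using that by blast
    then have "\<mu> B = \<mu> A + \<mu> (B - A)" using add[of A "B - A"] that by auto
    moreover have "\<mu> (B - A) \<ge> 0" using pos that by blast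
    ultimately show ?thesis by simp
  qed
  define Pre where "Pre B = {Z \<in> carrier G. Phi Z \<in> B}" for B
  define \<nu> where "\<nu> B = \<mu> (Pre B)" for B
  have Pre_c: "Pre B \<subseteq> carrier G" for B by (auto simp: Pre_def)
  have PreS: "Pre (Snf n) = carrier G" using Phi_S by (auto simp: Pre_def)
  have nadd: "\<nu> (B \<union> C) = \<nu> B + \<nu> C" if "B \<inter> C = {}" for B C
  proof -
    have "Pre (B \<union> C) = Pre B \<union> Pre C" "Pre B \<inter> Pre C = {}" using that by (auto simp: Pre_def)
    then show ?thesis unfolding \<nu>_def using add Pre_c by simp
  qed
  have npos: "\<nu> B \<ge> 0" for B unfolding \<nu>_def using pos Pre_c by blast
  have nmono: "\<nu> B \<le> \<nu> C" if "B \<subseteq> C" for B C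
    unfolding \<nu>_def by (rule mono) (use that Pre_c in \<open>auto simp: Pre_def\<close>)
  have ntot: "\<nu> (Snf n) = 1" unfolding \<nu>_def PreS tot ..
  have shift: "\<nu> B \<le> \<nu> C" if u: "validn n u" and BC: "\<And>x. x \<in> B \<Longrightarrow> SA.ev u x \<in> C" for u B C
  proof -
    have g: "wc u \<in> carrier G" using u by (rule wc_carrier)
    have "(\<lambda>x. wc u \<otimes>\<^bsub>G\<^esub> x) ` Pre B \<subseteq> Pre C"
    proof
      fix Y assume "Y \<in> (\<lambda>x. wc u \<otimes>\<^bsub>G\<^esub> x) ` Pre B"
      then obtain Z where Z: "Z \<in> carrier G" "Phi Z \<in> B" "Y = wc u \<otimes>\<^bsub>G\<^esub> Z" by (auto simp: Pre_def)
      have "Phi Y = SA.ev u (Phi Z)" using Z Phi_mult by simp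
      then show "Y \<in> Pre C" using Z g BC unfolding Pre_def by simp
    qed
    then have "\<mu> ((\<lambda>x. wc u \<otimes>\<^bsub>G\<^esub> x) ` Pre B) \<le> \<mu> (Pre C)" using mono Pre_c by blast
    then show ?thesis unfolding \<nu>_def using inv[OF g Pre_c] by simp
  qed
  have compl: "\<nu> (Snf n - B) = 1 - \<nu> B" if "B \<subseteq> Snf n" for B
  proof -
    have e: "(Snf n - B) \<union> B = Snf n" using that by blast
    have "\<nu> ((Snf n - B) \<union> B) = \<nu> (Snf n - B) + \<nu> B" by (rule nadd) blast
    then show ?thesis using e ntot by simp
  qed
  have sub: "Wp \<subseteq> Snf n" "Wm \<subseteq> Snf n" "Vp \<subseteq> Snf n" "Vm \<subseteq> Snf n"
    by (auto simp: Wp_def Wm_def Vp_def Vm_def)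
  have W1: "\<nu> (Snf n - Wm) \<le> \<nu> Wp"
  proof (rule shift[of "[(GA 1, True)]"])
    show "validn n [(GA 1, True)]" using n2 by (simp add: validn_def)
    fix x assume "x \<in> Snf n - Wm"
    then show "SA.ev [(GA 1, True)] x \<in> Wp" using pingW n2 by (simp add: SA.lact_def SA.L_def)
  qed
  have V1: "\<nu> (Snf n - Vm) \<le> \<nu> Vp"
  proof (rule shift[of "[(GA 3, True), (GA 2, False), (GA 1, True)]"])
    show "validn n [(GA 3, True), (GA 2, False), (GA 1, True)]" using n2 by (simp add: validn_def)
    fix x assume x: "x \<in> Snf n - Vm"
    have "SA.ev [(GA 3, True), (GA 2, False), (GA 1, True)] x = act_p n (act_w (act_pi n (act_wi (act_w x))))"
      using n2 by (simp add: SA.lact_def SA.L_def numeral_eq_Suc)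
    also have "\<dots> = act_p n (act_w (act_pi n x))" using x act_wi_w[of x n] by simp
    finally show "SA.ev [(GA 3, True), (GA 2, False), (GA 1, True)] x \<in> Vp" using pingV x by simp
  qed
  have d1: "Wp \<inter> Wm = {}" "Vp \<inter> Vm = {}" "(Wp \<union> Wm) \<inter> (Vp \<union> Vm) = {}"
    by (auto simp: Wp_def Wm_def Vp_def Vm_def)
  have s1: "\<nu> ((Wp \<union> Wm) \<union> (Vp \<union> Vm)) = \<nu> (Wp \<union> Wm) + \<nu> (Vp \<union> Vm)" by (rule nadd[OF d1(3)])
  have s2: "\<nu> (Wp \<union> Wm) = \<nu> Wp + \<nu> Wm" by (rule nadd[OF d1(1)])
  have s3: "\<nu> (Vp \<union> Vm) = \<nu> Vp + \<nu> Vm" by (rule nadd[OF d1(2)])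
  have le: "\<nu> ((Wp \<union> Wm) \<union> (Vp \<union> Vm)) \<le> \<nu> (Snf n)" by (rule nmono) (use sub in blast)
  have c1: "\<nu> (Snf n - Wm) = 1 - \<nu> Wm" by (rule compl[OF sub(2)])
  have c2: "\<nu> (Snf n - Vm) = 1 - \<nu> Vm" by (rule compl[OF sub(4)])
  have "\<nu> Wp + \<nu> Wm \<ge> 1" using W1 c1 by linarith
  moreover have "\<nu> Vp + \<nu> Vm \<ge> 1" using V1 c2 by linarith
  moreover note s1 s2 s3 le ntot
  ultimately show False by simp
qed

end


lemma extend_perm:
  assumes Y: "finite Y" and inj: "inj_on f D" and D: "D \<subseteq> Y" and fD: "f ` D \<subseteq> Y"
  shows "\<exists>g. bij_betw g Y Y \<and> (\<forall>x\<in>D. g x = f x)"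
proof -
  have "card (Y - D) = card (Y - f ` D)"
    using Y D fD inj by (simp add: card_Diff_subset finite_subset card_image)
  then obtain h where h: "bij_betw h (Y - D) (Y - f ` D)"
    using finite_same_card_bij Y by (meson finite_Diff)
  define g where "g x = (if x \<in> D then f x else h x)" for x
  have b1: "bij_betw g D (f ` D)"
    using inj unfolding bij_betw_def g_def inj_on_def by auto
  have b2: "bij_betw g (Y - D) (Y - f ` D)"
    using h by (rule bij_betw_cong[THEN iffD1, rotated]) (auto simp: g_def)
  have "bij_betw g (D \<union> (Y - D)) (f ` D \<union> (Y - f ` D))"
    by (rule bij_betw_combine[OF b1 b2]) blast
  moreover have "D \<union> (Y - D) = Y" "f ` D \<union> (Y - f ` D) = Y" using D fD by auto
  ultimately show ?thesis by (auto simp: g_def)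
qed

definition wt :: "nf \<Rightarrow> nat" where
  "wt x = sum_list (map (\<lambda>c. nat \<bar>fst c\<bar>) (snd x))"

definition Ynf :: "nat \<Rightarrow> nat \<Rightarrow> nf set" where
  "Ynf n K = {x \<in> Snf n. wt x \<le> K}"

lemma nfl_len: "nfl n L \<Longrightarrow> length L \<le> sum_list (map (\<lambda>c. nat \<bar>fst c\<bar>) L)"
  by (induction L) (auto simp: nfl_Cons)

lemma nfl_set: "nfl n L \<Longrightarrow> c \<in> set L \<Longrightarrow> fst c \<in> {- int (sum_list (map (\<lambda>c. nat \<bar>fst c\<bar>) L)) .. int (sum_list (map (\<lambda>c. nat \<bar>fst c\<bar>) L))} \<and> snd c < n"
  by (induction L) (auto simp: nfl_Cons)

lemma finite_Ynf: "finite (Ynf n K)"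
proof -
  have "Ynf n K \<subseteq> {0..<n} \<times> {L. set L \<subseteq> {- int K .. int K} \<times> {0..<n} \<and> length L \<le> K}"
  proof
    fix x assume x: "x \<in> Ynf n K"
    obtain i0 L where xe: "x = (i0, L)" by (cases x)
    have nf: "nfl n L" "i0 < n" and w: "sum_list (map (\<lambda>c. nat \<bar>fst c\<bar>) L) \<le> K"
      using x xe by (auto simp: Ynf_def Snf_def wt_def)
    have "set L \<subseteq> {- int K .. int K} \<times> {0..<n}"
    proof
      fix c assume "c \<in> set L"
      from nfl_set[OF nf(1) this] w show "c \<in> {- int K .. int K} \<times> {0..<n}"
        by (cases c) auto
    qed
    moreover have "length L \<le> K" using nfl_len[OF nf(1)] w by simp
    ultimately show "x \<in> {0..<n} \<times> {L. set L \<subseteq> {- int K .. int K} \<times> {0..<n} \<and> length L \<le> K}"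
      using xe nf by auto
  qed
  moreover have "finite ({0..<n} \<times> {L. set L \<subseteq> {- int K .. int K} \<times> {0..<n} \<and> length L \<le> K})"
    by (intro finite_cartesian_product finite_lists_length_le) auto
  ultimately show ?thesis by (rule finite_subset)
qed

lemma wt_p[simp]: "wt (act_p n x) = wt x" by (cases x) (simp add: wt_def)
lemma wt_pi[simp]: "wt (act_pi n x) = wt x" by (cases x) (simp add: wt_def)

lemma Y_p: "x \<in> Ynf n K \<Longrightarrow> act_p n x \<in> Ynf n K" by (simp add: Ynf_def act_p_S)
lemma Y_pi: "x \<in> Ynf n K \<Longrightarrow> act_pi n x \<in> Ynf n K" by (simp add: Ynf_def act_pi_S)

lemma inj_act_w: "inj_on act_w (Snf n)"
  by (metis act_wi_w inj_onI)


locale sofk = gam +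
  fixes K :: nat and g :: "nf \<Rightarrow> nf"
  assumes g_bij: "bij_betw g (Ynf n K) (Ynf n K)"
    and g_ext: "x \<in> Ynf n K \<Longrightarrow> act_w x \<in> Ynf n K \<Longrightarrow> g x = act_w x"
begin

abbreviation "YY \<equiv> Ynf n K"
definition "gi = inv_into YY g"

lemma gY: "x \<in> YY \<Longrightarrow> g x \<in> YY" using g_bij bij_betwE by blast
lemma giY: "x \<in> YY \<Longrightarrow> gi x \<in> YY" unfolding gi_def using g_bij
  by (meson bij_betwE bij_betw_inv_into)
lemma g_gi: "x \<in> YY \<Longrightarrow> g (gi x) = x" unfolding gi_def using g_bij
  by (simp add: bij_betw_inv_into_right)
lemma gi_g: "x \<in> YY \<Longrightarrow> gi (g x) = x" unfolding gi_def using g_bij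
  by (simp add: bij_betw_inv_into_left)

lemma YS: "x \<in> YY \<Longrightarrow> x \<in> Snf n" by (simp add: Ynf_def)

lemma p_n_Y: "x \<in> YY \<Longrightarrow> (act_p n ^^ n) x = x" using act_p_n YS by blast

sublocale RA: actsys n YY "act_p n" "act_pi n" g gi
  by unfold_locales (auto intro: Y_p Y_pi gY giY g_gi gi_g act_p_pi act_pi_p YS p_n_Y)

definition mkw :: "int \<Rightarrow> nf \<Rightarrow> nf" where
  "mkw j r = (if j = 0 then r else (0, (j, fst r) # snd r))"

definition good :: "nf \<Rightarrow> bool" where
  "good r \<longleftrightarrow> r \<in> Snf n \<and> (fst r \<noteq> 0 \<or> snd r = [])"

lemma act_w_mkw: "good r \<Longrightarrow> act_w (mkw j r) = mkw (j+1) r"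
  by (cases r) (auto simp: mkw_def good_def)

lemma mkw_Y: "good r \<Longrightarrow> nat \<bar>j\<bar> + wt r \<le> K \<Longrightarrow> mkw j r \<in> YY"
  by (cases r) (auto simp: mkw_def good_def Ynf_def Snf_def wt_def nfl_Cons)

lemma g_mkw: "good r \<Longrightarrow> nat \<bar>j\<bar> + wt r \<le> K \<Longrightarrow> nat \<bar>j+1\<bar> + wt r \<le> K \<Longrightarrow> g (mkw j r) = mkw (j+1) r"
  using g_ext[of "mkw j r"] mkw_Y act_w_mkw by metis

lemma gpow_mkw: "good r \<Longrightarrow> int m + wt r \<le> K \<Longrightarrow> (g ^^ m) r = mkw (int m) r"
proof (induction m)
  case 0 then show ?case by (simp add: mkw_def)
next
  case (Suc m)
  have "(g ^^ Suc m) r = g (mkw (int m) r)" using Suc by simp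
  also have "\<dots> = mkw (int m + 1) r" using Suc by (intro g_mkw) auto
  finally show ?case by (simp add: add.commute)
qed

lemma gipow_mkw: "good r \<Longrightarrow> int m + wt r \<le> K \<Longrightarrow> (gi ^^ m) r = mkw (- int m) r"
proof (induction m)
  case 0 then show ?case by (simp add: mkw_def)
next
  case (Suc m)
  have "(gi ^^ Suc m) r = gi (mkw (- int m) r)" using Suc by simp
  also have "mkw (- int m) r = g (mkw (- int m - 1) r)"
    using Suc g_mkw[of r "- int m - 1"] by auto
  also have "gi \<dots> = mkw (- int m - 1) r" using Suc by (intro gi_g mkw_Y) auto
  moreover have "- int m - 1 = - int (Suc m)" by simp
  ultimately show ?case by metis
qed

end


definition "Pw = [(GA 1, False), (GA 2, True)]"
definition "Pk i = concat (replicate i Pw)"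
definition "Wpow (k::int) = (if 0 \<le> k then replicate (nat k) (GA 1, True) else replicate (nat (-k)) (GA 1, False))"
primrec psiLw :: "(int \<times> nat) list \<Rightarrow> word" where
  "psiLw [] = []"
| "psiLw (c#L) = Wpow (fst c) @ Pk (snd c) @ psiLw L"
definition "psiw x = Pk (fst x) @ psiLw (snd x)"

lemma Pk_Suc: "Pk (Suc i) = Pw @ Pk i" by (simp add: Pk_def)

context gam
begin

lemma wc_Pw: "wc Pw = P"
proof -
  have "wc Pw = wc [(GA 1, False)] \<otimes>\<^bsub>G\<^esub> wc [(GA 2, True)]" by (simp add: Pw_def mult_wcn)
  also have "\<dots> = inv\<^bsub>G\<^esub> (A 1) \<otimes>\<^bsub>G\<^esub> A 2" using n2 by (simp add: wc_inv validn_def A_def)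
  also have "\<dots> = P" proof -
    have "idx 0 0 = 1" "idx 0 1 = 2" by (simp_all add: idx_def)
    then show ?thesis by (simp only: P_def)
  qed
  finally show ?thesis .
qed

lemma wc_Pk: "wc (Pk i) = P [^]\<^bsub>G\<^esub> i"
proof (induction i)
  case 0 then show ?case by (simp add: Pk_def one_GG)
next
  case (Suc i)
  have "wc (Pk (Suc i)) = P \<otimes>\<^bsub>G\<^esub> P [^]\<^bsub>G\<^esub> i" by (simp add: Pk_Suc mult_wcn[symmetric] wc_Pw Suc)
  also have "\<dots> = P [^]\<^bsub>G\<^esub> Suc i" using P_carrier by (simp only: nat_pow_Suc2)
  finally show ?case .
qed

lemma wc_rep: "validn n [l] \<Longrightarrow> wc (replicate m l) = wc [l] [^]\<^bsub>G\<^esub> m"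
proof (induction m)
  case 0 then show ?case by (simp add: one_GG)
next
  case (Suc m)
  have c: "wc [l] \<in> carrier G" using Suc.prems by (rule wc_carrier)
  have "wc (replicate (Suc m) l) = wc [l] \<otimes>\<^bsub>G\<^esub> wc [l] [^]\<^bsub>G\<^esub> m"
    by (subst replicate_Suc, subst wc_Cons, simp only: Suc.IH[OF Suc.prems])
  also have "\<dots> = wc [l] [^]\<^bsub>G\<^esub> Suc m" using c by (simp only: nat_pow_Suc2)
  finally show ?case .
qed

lemma wc_W1: "wc [(GA 1, True)] = W" by (simp add: W_def A_def idx_def)

lemma wc_Wpow: "wc (Wpow k) = W [^]\<^bsub>G\<^esub> k"
proof (cases "0 \<le> k")
  case True
  have v: "validn n [(GA 1, True)]" using n2 by (simp add: validn_def)
  have "wc (replicate (nat k) (GA 1, True)) = W [^]\<^bsub>G\<^esub> (nat k)" by (simp only: wc_rep[OF v] wc_W1)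
  then have "wc (Wpow k) = W [^]\<^bsub>G\<^esub> (nat k)" using True by (simp add: Wpow_def)
  also have "\<dots> = W [^]\<^bsub>G\<^esub> (int (nat k))" by (simp add: int_pow_int)
  finally show ?thesis using True by simp
next
  case False
  have vt: "validn n [(GA 1, True)]" using n2 by (simp add: validn_def)
  have "wc [(GA 1, False)] = inv\<^bsub>G\<^esub> W" using wc_inv[OF vt] unfolding wc_W1 .
  moreover have v: "validn n [(GA 1, False)]" using n2 by (simp add: validn_def)
  ultimately have "wc (replicate (nat (-k)) (GA 1, False)) = (inv\<^bsub>G\<^esub> W) [^]\<^bsub>G\<^esub> (nat (-k))" by (simp only: wc_rep[OF v])
  then have "wc (Wpow k) = (inv\<^bsub>G\<^esub> W) [^]\<^bsub>G\<^esub> (nat (-k))" using False by (simp add: Wpow_def)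
  also have "\<dots> = inv\<^bsub>G\<^esub> (W [^]\<^bsub>G\<^esub> (nat (-k)))" using W_carrier by (rule nat_pow_inv)
  also have "\<dots> = W [^]\<^bsub>G\<^esub> (- int (nat (-k)))" using W_carrier by (rule int_pow_neg_int[symmetric])
  also have "- int (nat (-k)) = k" using False by simp
  finally show ?thesis .
qed

lemma wc_psiLw: "wc (psiLw L) = psiL L"
  by (induction L) (simp_all add: one_GG mult_wcn[symmetric] wc_Wpow wc_Pk)

lemma wc_psiw: "wc (psiw x) = psi x"
  by (simp add: psiw_def psi_def mult_wcn[symmetric] wc_Pk wc_psiLw)

end

context sofk
begin

lemma ev_Pw: "y \<in> YY \<Longrightarrow> RA.ev Pw y = act_p n y"
  using n2 by (simp add: Pw_def RA.lact_def RA.L_def gi_g Y_p)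

lemma ev_Pk: "y \<in> YY \<Longrightarrow> RA.ev (Pk i) y = (act_p n ^^ i) y"
proof (induction i arbitrary: y)
  case (Suc i)
  then show ?case using ev_Pw RA.powT by (simp add: Pk_Suc)
qed (simp add: Pk_def)

lemma ev_repT: "y \<in> YY \<Longrightarrow> RA.ev (replicate m (GA 1, True)) y = (g ^^ m) y"
  using n2 by (induction m) (simp_all add: RA.lact_def RA.L_def)
lemma ev_repF: "y \<in> YY \<Longrightarrow> RA.ev (replicate m (GA 1, False)) y = (gi ^^ m) y"
  using n2 by (induction m) (simp_all add: RA.lact_def RA.L_def)

lemma wt_cons: "wt (a, c # L) = nat \<bar>fst c\<bar> + wt (b, L)" by (simp add: wt_def)

lemma ev_psiLw: "nfl n L \<Longrightarrow> wt (0, L) \<le> K \<Longrightarrow> RA.ev (psiLw L) (0,[]) = (0, L)"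
proof (induction L)
  case Nil then show ?case by simp
next
  case (Cons c L')
  obtain k i where c: "c = (k,i)" by (cases c)
  have nf: "k \<noteq> 0" "i < n" "nfl n L'" "L' \<noteq> [] \<longrightarrow> 0 < i" using Cons.prems c by (auto simp: nfl_Cons)
  have w: "nat \<bar>k\<bar> + wt (i, L') \<le> K" using Cons.prems c wt_cons[of 0 c L' i] by simp
  have IH: "RA.ev (psiLw L') (0,[]) = (0, L')" using Cons nf w wt_cons[of 0 c L' 0] by simp
  have Y0: "(0, L') \<in> YY" using nf w n2 by (auto simp: Ynf_def Snf_def wt_def)
  have r: "RA.ev (Pk i) (0, L') = (i, L')" using ev_Pk[OF Y0] nf n2 by (simp add: act_p_pow)
  have good: "good (i, L')" using nf by (auto simp: good_def Snf_def)
  have rY: "(i, L') \<in> YY" using nf w by (auto simp: Ynf_def Snf_def)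
  have m: "RA.ev (Wpow k) (i, L') = mkw k (i, L')"
  proof (cases "0 \<le> k")
    case True
    then show ?thesis using ev_repT[OF rY] gpow_mkw[OF good, of "nat k"] w by (simp add: Wpow_def)
  next
    case False
    then show ?thesis using ev_repF[OF rY] gipow_mkw[OF good, of "nat (-k)"] w by (simp add: Wpow_def)
  qed
  show ?case using IH r m nf c by (simp add: mkw_def)
qed

lemma ev_psiw: "x \<in> Snf n \<Longrightarrow> wt x \<le> K \<Longrightarrow> RA.ev (psiw x) (0,[]) = x"
proof -
  assume x: "x \<in> Snf n" "wt x \<le> K"
  obtain i0 L where xe: "x = (i0, L)" by (cases x)
  have nf: "i0 < n" "nfl n L" using x xe by (auto simp: Snf_def)
  have w: "wt (0, L) \<le> K" using x xe by (simp add: wt_def)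
  have Y0: "(0, L) \<in> YY" using nf w n2 by (auto simp: Ynf_def Snf_def)
  show ?thesis using xe ev_psiLw[OF nf(2) w] ev_Pk[OF Y0] nf by (simp add: psiw_def act_p_pow)
qed

end


context sofk
begin

definition rho :: "word set \<Rightarrow> nf \<Rightarrow> nf" where
  "rho Z = restrict (RA.ev (SOME u. u \<in> Z)) YY"

lemma rho_wc: "rho (wc u) = restrict (RA.ev u) YY"
proof -
  have "weq (2*n+1) (2*n+1) (piset n) u (SOME x. x \<in> wc u)"
    unfolding wcn_def by (rule some_wclass)
  then show ?thesis unfolding rho_def using RA.ev_respects by (intro restrict_ext) metis
qed

lemma rho_mem: "rho Z \<in> YY \<rightarrow>\<^sub>E YY"
  unfolding rho_def using RA.evT by auto

lemma rho_mult: "Z1 \<in> carrier G \<Longrightarrow> Z2 \<in> carrier G \<Longrightarrow> rho (Z1 \<otimes>\<^bsub>G\<^esub> Z2) = compose YY (rho Z1) (rho Z2)"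
proof -
  assume "Z1 \<in> carrier G" "Z2 \<in> carrier G"
  then obtain u1 u2 where u: "Z1 = wc u1" "Z2 = wc u2" using carrier_wc by blast
  show ?thesis unfolding u mult_wcn rho_wc compose_def
    by (intro restrict_ext) (simp add: RA.evT)
qed

lemma rho_one: "rho \<one>\<^bsub>G\<^esub> = restrict id YY"
  unfolding one_GG rho_wc by simp

lemma e_Y: "(0, []) \<in> YY" using n2 by (simp add: Ynf_def Snf_def wt_def)

lemma rho_nontriv:
  assumes Z: "Z \<in> carrier G" "Z \<noteq> \<one>\<^bsub>G\<^esub>" "wt (Phi Z) \<le> K"
  shows "rho Z (0,[]) \<noteq> (0,[])"
proof -
  obtain u where u: "validn n u" "Z = wc u" using carrier_wc[OF Z(1)] by blast
  define x where "x = Phi Z"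
  have xS: "x \<in> Snf n" using Phi_S[OF Z(1)] x_def by simp
  have xe: "x = SA.ev u (0,[])" using x_def u(2) Phi_wc by simp
  have "Z = psi x" using wc_psi[OF u(1)] u(2) xe by simp
  then have "Z = wc (psiw x)" by (simp add: wc_psiw)
  then have "rho Z = restrict (RA.ev (psiw x)) YY" by (simp add: rho_wc)
  then have "rho Z (0,[]) = RA.ev (psiw x) (0,[])" using e_Y by simp
  also have "\<dots> = x" using ev_psiw[OF xS] Z(3) x_def by simp
  finally have "rho Z (0,[]) = x" .
  moreover have "x \<noteq> (0,[])" using Phi_one[OF Z(1)] Z(2) x_def by metis
  ultimately show ?thesis by simp
qed

definition "Q = rho ` carrier G"
definition "sig0 Z q = compose YY (rho Z) q"

lemma finite_Q: "finite Q"
proof -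
  have "Q \<subseteq> YY \<rightarrow>\<^sub>E YY" using rho_mem by (auto simp: Q_def)
  moreover have "finite (YY \<rightarrow>\<^sub>E YY)" by (intro finite_PiE finite_Ynf)
  ultimately show ?thesis by (rule finite_subset)
qed

lemma sig0_rho: "Z \<in> carrier G \<Longrightarrow> Z' \<in> carrier G \<Longrightarrow> sig0 Z (rho Z') = rho (Z \<otimes>\<^bsub>G\<^esub> Z')"
  by (simp add: sig0_def rho_mult)

lemma sig0_Q: "Z \<in> carrier G \<Longrightarrow> q \<in> Q \<Longrightarrow> sig0 Z q \<in> Q"
  by (auto simp: Q_def sig0_rho)

lemma sig0_mult: "Z1 \<in> carrier G \<Longrightarrow> Z2 \<in> carrier G \<Longrightarrow> q \<in> Q \<Longrightarrow> sig0 (Z1 \<otimes>\<^bsub>G\<^esub> Z2) q = sig0 Z1 (sig0 Z2 q)"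
  by (auto simp: Q_def sig0_rho m_assoc)

lemma sig0_inv: "Z \<in> carrier G \<Longrightarrow> q \<in> Q \<Longrightarrow> sig0 (inv\<^bsub>G\<^esub> Z) (sig0 Z q) = q"
  by (auto simp: Q_def sig0_rho m_assoc[symmetric])

lemma sig0_inv2: "Z \<in> carrier G \<Longrightarrow> q \<in> Q \<Longrightarrow> sig0 Z (sig0 (inv\<^bsub>G\<^esub> Z) q) = q"
  by (auto simp: Q_def sig0_rho m_assoc[symmetric])

lemma sig0_bij: "Z \<in> carrier G \<Longrightarrow> bij_betw (sig0 Z) Q Q"
  by (rule bij_betw_byWitness[where f'="sig0 (inv\<^bsub>G\<^esub> Z)"]) (auto simp: sig0_inv sig0_inv2 sig0_Q)

lemma sig0_nofix: assumes "Z \<in> carrier G" "Z \<noteq> \<one>\<^bsub>G\<^esub>" "wt (Phi Z) \<le> K" "q \<in> Q"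
  shows "sig0 Z q \<noteq> q"
proof
  assume fx: "sig0 Z q = q"
  obtain Z' where Z': "Z' \<in> carrier G" "q = rho Z'" using assms(4) by (auto simp: Q_def)
  have "rho (Z \<otimes>\<^bsub>G\<^esub> Z') = rho Z'" using fx Z' assms(1) by (simp add: sig0_rho)
  note eq = this
  have "rho Z = rho (Z \<otimes>\<^bsub>G\<^esub> Z' \<otimes>\<^bsub>G\<^esub> inv\<^bsub>G\<^esub> Z')" using Z' assms(1) by (simp add: m_assoc)
  also have "\<dots> = compose YY (rho (Z \<otimes>\<^bsub>G\<^esub> Z')) (rho (inv\<^bsub>G\<^esub> Z'))"
    using Z' assms(1) by (simp add: rho_mult)
  also have "\<dots> = compose YY (rho Z') (rho (inv\<^bsub>G\<^esub> Z'))" using eq by simp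
  also have "\<dots> = rho (Z' \<otimes>\<^bsub>G\<^esub> inv\<^bsub>G\<^esub> Z')" using Z' by (intro rho_mult[symmetric]) auto
  also have "\<dots> = rho \<one>\<^bsub>G\<^esub>" using Z' by simp
  finally have "rho Z = rho \<one>\<^bsub>G\<^esub>" .
  then have "rho Z (0,[]) = (0,[])" using e_Y by (simp add: rho_one)
  then show False using rho_nontriv assms by blast
qed

lemma sofk_main:
  assumes F: "F \<subseteq> carrier G" "\<And>Z. Z \<in> F \<Longrightarrow> wt (Phi Z) \<le> K" and eps: "(\<epsilon>::real) > 0"
  shows "\<exists>N::nat. N > 0 \<and> (\<exists>\<sigma> :: word set \<Rightarrow> nat \<Rightarrow> nat.
        (\<forall>a \<in> carrier G. bij_betw (\<sigma> a) {..<N} {..<N}) \<and>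
        (\<forall>a \<in> F. \<forall>b \<in> F.
           real (card {x \<in> {..<N}. \<sigma> (a \<otimes>\<^bsub>G\<^esub> b) x \<noteq> \<sigma> a (\<sigma> b x)}) \<le> \<epsilon> * real N) \<and>
        (\<forall>a \<in> F. a \<noteq> \<one>\<^bsub>G\<^esub> \<longrightarrow>
           real (card {x \<in> {..<N}. \<sigma> a x = x}) \<le> \<epsilon> * real N))"
proof -
  define N where "N = card Q"
  obtain h where h: "bij_betw h {0..<N} Q" using ex_bij_betw_nat_finite[OF finite_Q] N_def by blast
  have h': "bij_betw h {..<N} Q" using h by (simp add: atLeast0LessThan)
  define hi where "hi = inv_into {..<N} h"
  have hi: "bij_betw hi Q {..<N}" unfolding hi_def by (rule bij_betw_inv_into[OF h'])
  have h_hi: "q \<in> Q \<Longrightarrow> h (hi q) = q" for q unfolding hi_def using h' by (simp add: bij_betw_inv_into_right)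
  have hi_h: "i < N \<Longrightarrow> hi (h i) = i" for i unfolding hi_def using h' by (simp add: bij_betw_inv_into_left)
  have hQ: "i < N \<Longrightarrow> h i \<in> Q" for i using h' bij_betwE by blast
  have hiN: "q \<in> Q \<Longrightarrow> hi q < N" for q using hi bij_betwE by blast
  have Qne: "rho \<one>\<^bsub>G\<^esub> \<in> Q" by (simp add: Q_def)
  have Npos: "N > 0" unfolding N_def using finite_Q Qne card_gt_0_iff by blast
  define \<sigma> where "\<sigma> Z i = (if i < N then hi (sig0 Z (h i)) else i)" for Z i
  have bij: "bij_betw (\<sigma> Z) {..<N} {..<N}" if Z: "Z \<in> carrier G" for Z
  proof -
    have "bij_betw (hi \<circ> sig0 Z \<circ> h) {..<N} {..<N}"
      by (rule bij_betw_trans[OF h' bij_betw_trans[OF sig0_bij[OF Z] hi]])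
    then show ?thesis by (rule bij_betw_cong[THEN iffD1, rotated]) (simp add: \<sigma>_def)
  qed
  have hom: "{x \<in> {..<N}. \<sigma> (a \<otimes>\<^bsub>G\<^esub> b) x \<noteq> \<sigma> a (\<sigma> b x)} = {}" if ab: "a \<in> carrier G" "b \<in> carrier G" for a b
  proof -
    have "\<sigma> (a \<otimes>\<^bsub>G\<^esub> b) x = \<sigma> a (\<sigma> b x)" if x: "x < N" for x
    proof -
      have q: "h x \<in> Q" using hQ[OF x] .
      have q2: "sig0 b (h x) \<in> Q" using sig0_Q[OF ab(2) q] .
      have "\<sigma> b x < N" using x hiN[OF q2] by (simp add: \<sigma>_def)
      then have "\<sigma> a (\<sigma> b x) = hi (sig0 a (h (hi (sig0 b (h x)))))" using x by (simp add: \<sigma>_def)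
      also have "\<dots> = hi (sig0 a (sig0 b (h x)))" using h_hi[OF q2] by simp
      also have "\<dots> = \<sigma> (a \<otimes>\<^bsub>G\<^esub> b) x" using x sig0_mult[OF ab(1,2) q] by (simp add: \<sigma>_def)
      finally show ?thesis by simp
    qed
    then show ?thesis by auto
  qed
  have nofix: "{x \<in> {..<N}. \<sigma> a x = x} = {}" if "a \<in> F" "a \<noteq> \<one>\<^bsub>G\<^esub>" for a
  proof -
    have "\<sigma> a x \<noteq> x" if x: "x < N" for x
    proof
      assume "\<sigma> a x = x"
      then have "hi (sig0 a (h x)) = x" using x by (simp add: \<sigma>_def)
      then have "h (hi (sig0 a (h x))) = h x" by simp
      moreover have aC: "a \<in> carrier G" using \<open>a \<in> F\<close> F(1) by blast
      moreover have "sig0 a (h x) \<in> Q" using sig0_Q[OF aC hQ[OF x]] .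
      ultimately have "sig0 a (h x) = h x" using h_hi by simp
      then show False using sig0_nofix[OF aC \<open>a \<noteq> _\<close> F(2)[OF \<open>a \<in> F\<close>] hQ[OF x]] by blast
    qed
    then show ?thesis by auto
  qed
  have z: "0 \<le> \<epsilon> * real N" using eps by simp
  have c1: "\<forall>a \<in> F. \<forall>b \<in> F.
           real (card {x \<in> {..<N}. \<sigma> (a \<otimes>\<^bsub>G\<^esub> b) x \<noteq> \<sigma> a (\<sigma> b x)}) \<le> \<epsilon> * real N"
  proof (intro ballI)
    fix a b assume "a \<in> F" "b \<in> F"
    then have "{x \<in> {..<N}. \<sigma> (a \<otimes>\<^bsub>G\<^esub> b) x \<noteq> \<sigma> a (\<sigma> b x)} = {}" using F(1) hom by blast
    then show "real (card {x \<in> {..<N}. \<sigma> (a \<otimes>\<^bsub>G\<^esub> b) x \<noteq> \<sigma> a (\<sigma> b x)}) \<le> \<epsilon> * real N"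
      using z by (simp only: card.empty of_nat_0)
  qed
  have c2: "\<forall>a \<in> F. a \<noteq> \<one>\<^bsub>G\<^esub> \<longrightarrow> real (card {x \<in> {..<N}. \<sigma> a x = x}) \<le> \<epsilon> * real N"
  proof (intro ballI impI)
    fix a assume "a \<in> F" "a \<noteq> \<one>\<^bsub>G\<^esub>"
    then have "{x \<in> {..<N}. \<sigma> a x = x} = {}" using nofix by blast
    then show "real (card {x \<in> {..<N}. \<sigma> a x = x}) \<le> \<epsilon> * real N"
      using z by (simp only: card.empty of_nat_0)
  qed
  show ?thesis
    apply (rule exI[of _ N])
    apply (rule conjI[OF Npos])
    apply (rule exI[of _ \<sigma>])
    using bij c1 c2 by blast
qed

end

context gam
begin

lemma sofic_G: "sofic G"
  unfolding sofic_def
proof (intro allI impI)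
  fix F :: "word set set" and \<epsilon> :: real
  assume a: "finite F \<and> F \<subseteq> carrier G \<and> \<epsilon> > 0"
  define K where "K = (\<Sum>Z\<in>F. wt (Phi Z))"
  have wK: "Z \<in> F \<Longrightarrow> wt (Phi Z) \<le> K" for Z unfolding K_def using a by (intro member_le_sum) auto
  define D where "D = {x \<in> Ynf n K. act_w x \<in> Ynf n K}"
  have "inj_on act_w D" using inj_act_w by (rule inj_on_subset) (auto simp: D_def Ynf_def)
  then obtain g where g: "bij_betw g (Ynf n K) (Ynf n K)" "\<forall>x\<in>D. g x = act_w x"
    using extend_perm[where Y="Ynf n K" and f=act_w and D=D, OF finite_Ynf] by (auto simp: D_def)
  interpret sofk n K g
    by unfold_locales (use g in \<open>auto simp: D_def\<close>)
  show "\<exists>N::nat. N > 0 \<and> (\<exists>\<sigma> :: word set \<Rightarrow> nat \<Rightarrow> nat.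
        (\<forall>g \<in> carrier G. bij_betw (\<sigma> g) {..<N} {..<N}) \<and>
        (\<forall>g \<in> F. \<forall>h \<in> F.
           real (card {x \<in> {..<N}. \<sigma> (g \<otimes>\<^bsub>G\<^esub> h) x \<noteq> \<sigma> g (\<sigma> h x)}) \<le> \<epsilon> * real N) \<and>
        (\<forall>g \<in> F. g \<noteq> \<one>\<^bsub>G\<^esub> \<longrightarrow>
           real (card {x \<in> {..<N}. \<sigma> g x = x}) \<le> \<epsilon> * real N))"
    using sofk_main[of F \<epsilon>] a wK by blast
qed

end


lemma grid_idx: "c \<in> grid1 n \<Longrightarrow> c = (idx ((fst c - 1) div 2) ((fst c - 1) mod 2), idx ((snd c - 1) div 2) ((snd c - 1) mod 2))"
  by (cases c) (auto simp: grid1_def idx_def)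

lemma grid_bounds: "c \<in> grid1 n \<Longrightarrow> (fst c - 1) div 2 < n \<and> (snd c - 1) div 2 < n"
  by (cases c) (auto simp: grid1_def)

lemma mod_shift: "(b::nat) mod n < n \<Longrightarrow> (b + g + (n - b mod n)) mod n = g mod n"
proof -
  assume a: "b mod n < n"
  have d: "n * (b div n) + b mod n = b" by (rule mult_div_mod_eq)
  have e: "b + g + (n - b mod n) = g + n * (b div n) + n" using a d by linarith
  show ?thesis by (subst e) simp
qed

lemma mod_cancel_lt: fixes b g g' n :: nat assumes "(b + g) mod n = (b + g') mod n" "g < n" "g' < n" shows "g = g'"
proof -
  have n0: "0 < n" using assms(2) by simp
  have a: "b mod n < n" using n0 by simp
  have "(b + g + (n - b mod n)) mod n = (b + g' + (n - b mod n)) mod n"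
    using assms(1) by (metis mod_add_left_eq)
  then have "g mod n = g' mod n" using mod_shift[OF a] by simp
  then show ?thesis using assms by simp
qed

lemma grid_eq: assumes "c \<in> grid1 n" "d \<in> grid1 n" "(fst c - 1) div 2 = (fst d - 1) div 2"
   "(fst c - 1) mod 2 = (fst d - 1) mod 2" "(snd c - 1) div 2 = (snd d - 1) div 2" "(snd c - 1) mod 2 = (snd d - 1) mod 2"
  shows "c = d"
proof -
  have "fst c - 1 = fst d - 1" using assms(3,4) by (metis div_mult_mod_eq)
  moreover have "snd c - 1 = snd d - 1" using assms(5,6) by (metis div_mult_mod_eq)
  moreover have "fst c \<ge> 1" "fst d \<ge> 1" "snd c \<ge> 1" "snd d \<ge> 1" using assms(1,2) by (auto simp: grid1_def)
  ultimately have "fst c = fst d" "snd c = snd d" by linarith+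
  then show ?thesis by (simp add: prod_eq_iff)
qed

lemma key_inj: assumes "c \<in> grid1 n" "d \<in> grid1 n" "key n c = key n d" "(fst c - 1) mod 2 = (fst d - 1) mod 2"
  shows "c = d"
proof -
  have "(fst c - 1) div 2 = (fst d - 1) div 2" "(snd c - 1) mod 2 = (snd d - 1) mod 2"
    and m: "((fst c - 1) mod 2 + (snd c - 1) div 2) mod n = ((fst d - 1) mod 2 + (snd d - 1) div 2) mod n"
    using assms(3) by (auto simp: key_def)
  moreover have "(snd c - 1) div 2 = (snd d - 1) div 2"
    using m assms(4) grid_bounds[OF assms(1)] grid_bounds[OF assms(2)] by (metis mod_cancel_lt)
  ultimately show ?thesis using grid_eq[OF assms(1,2) _ assms(4)] by blast
qed

lemma partner: assumes "c \<in> grid1 n" "2 \<le> n" shows "\<exists>d \<in> grid1 n. d \<noteq> c \<and> key n c = key n d"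
proof -
  define a where "a = (fst c - 1) div 2"
  define b where "b = (fst c - 1) mod 2"
  define g where "g = (snd c - 1) div 2"
  define e where "e = (snd c - 1) mod 2"
  have c: "c = (idx a b, idx g e)" using grid_idx[OF assms(1)] unfolding a_def b_def g_def e_def .
  have ab: "a < n" "g < n" "b < 2" "e < 2" using grid_bounds[OF assms(1)] unfolding a_def b_def g_def e_def by auto
  show ?thesis
  proof (cases "b = 0")
    case True
    define d where "d = (idx a 1, idx ((g+n-1) mod n) e)"
    have ar: "(1 + (g+n-1) mod n) mod n = g"
    proof -
      have "(1 + (g+n-1) mod n) mod n = (1 + (g+n-1)) mod n" by (simp add: mod_Suc_eq)
      also have "1 + (g+n-1) = g + n" using assms(2) by simp
      finally show ?thesis using ab by simp
    qed
    have "d \<in> grid1 n" unfolding d_def using ab assms(2) by (intro idx_grid) auto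
    moreover have "d \<noteq> c" using c True by (simp add: d_def idx_def)
    moreover have "key n c = key n d" using c True ab ar
      by (simp add: d_def key_idx)
    ultimately show ?thesis by blast
  next
    case False
    then have b1: "b = 1" using ab by simp
    define d where "d = (idx a 0, idx ((g+1) mod n) e)"
    have "d \<in> grid1 n" unfolding d_def using ab assms(2) by (intro idx_grid) auto
    moreover have "d \<noteq> c" using c b1 by (simp add: d_def idx_def)
    moreover have "key n c = key n d" using c b1 ab
      by (simp add: d_def key_idx add.commute)
    ultimately show ?thesis by blast
  qed
qed

lemma three_same: assumes "c \<in> grid1 n" "d \<in> grid1 n" "e \<in> grid1 n" "c \<noteq> d" "key n c = key n d" "key n c = key n e"
  shows "e = c \<or> e = d"
proof -
  have "(fst c - 1) mod 2 \<noteq> (fst d - 1) mod 2" using key_inj[OF assms(1,2,5)] assms(4) by blast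
  moreover have "\<forall>x y z::nat. x < 2 \<longrightarrow> y < 2 \<longrightarrow> z < 2 \<longrightarrow> x \<noteq> y \<longrightarrow> z = x \<or> z = y" by arith
  moreover have "(fst c - 1) mod 2 < 2" "(fst d - 1) mod 2 < 2" "(fst e - 1) mod 2 < 2" by simp_all
  ultimately have "(fst e - 1) mod 2 = (fst c - 1) mod 2 \<or> (fst e - 1) mod 2 = (fst d - 1) mod 2" by blast
  then show ?thesis
  proof
    assume "(fst e - 1) mod 2 = (fst c - 1) mod 2"
    from key_inj[OF assms(3,1) assms(6)[symmetric] this] show ?thesis by simp
  next
    assume h: "(fst e - 1) mod 2 = (fst d - 1) mod 2"
    have ked: "key n e = key n d" using assms(5,6) by simp
    from key_inj[OF assms(3,2) ked h] show ?thesis by simp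
  qed
qed

lemma grid_block: "P \<in> piset n \<Longrightarrow> z \<in> P \<Longrightarrow> z \<in> grid1 n \<Longrightarrow>
   \<exists>c d. P = {c,d} \<and> c \<in> grid1 n \<and> d \<in> grid1 n \<and> c \<noteq> d \<and> key n c = key n d"
  unfolding piset_def by (auto simp: grid1_def)

lemma nongrid_block: "P \<in> piset n \<Longrightarrow> z \<in> P \<Longrightarrow> z \<notin> grid1 n \<Longrightarrow>
   P = (if z = (0,0) then {(0,0)} else {(fst z + snd z, 0), (0, fst z + snd z)})"
  unfolding piset_def by (auto simp: grid1_def)

lemma block_eq:
  assumes "P = {c,d}" "c \<in> grid1 n" "d \<in> grid1 n" "c \<noteq> d" "key n c = key n d"
    and "Q = {c',d'}" "c' \<in> grid1 n" "d' \<in> grid1 n" "c' \<noteq> d'" "key n c' = key n d'"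
    and "z \<in> P" "z \<in> Q"
  shows "P = Q"
proof -
  have kz: "key n c = key n z" "key n c' = key n z" using assms by auto
  have "c' = c \<or> c' = d" using three_same[OF assms(2,3,7,4,5)] kz by simp
  moreover have "d' = c \<or> d' = d" using three_same[OF assms(2,3,8,4,5)] kz assms(10) by simp
  moreover have "c = c' \<or> c = d'" using three_same[OF assms(7,8,2,9,10)] kz by simp
  moreover have "d = c' \<or> d = d'" using three_same[OF assms(7,8,3,9,10)] kz assms(5) by simp
  ultimately show ?thesis using assms(1,6) by blast
qed

lemma piset_partition: assumes "2 \<le> n" shows "is_partition (piset n) ({0..2*n} \<times> {0..2*n})"
  unfolding is_partition_def
proof (intro conjI ballI impI)
  show "\<Union>(piset n) = {0..2*n} \<times> {0..2*n}"
  proof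
    show "\<Union>(piset n) \<subseteq> {0..2*n} \<times> {0..2*n}" by (auto simp: piset_def grid1_def)
  next
    show "{0..2*n} \<times> {0..2*n} \<subseteq> \<Union>(piset n)"
    proof
      fix c assume c: "c \<in> {0..2*n} \<times> {0..2*n}"
      obtain i j where ij: "c = (i,j)" by (cases c)
      show "c \<in> \<Union>(piset n)"
      proof (cases "i = 0 \<or> j = 0")
        case True
        then consider "i = 0" "j = 0" | "i = 0" "j \<noteq> 0" | "i \<noteq> 0" "j = 0" by blast
        then show ?thesis
        proof cases
          case 1 then show ?thesis using ij by (auto simp: piset_def)
        next
          case 2 then have "{(j,0),(0,j)} \<in> piset n" using c ij by (auto simp: piset_def)
          then show ?thesis using ij 2 by blast
        next
          case 3 then have "{(i,0),(0,i)} \<in> piset n" using c ij by (auto simp: piset_def)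
          then show ?thesis using ij 3 by blast
        qed
      next
        case False
        then have g: "c \<in> grid1 n" using c ij by (auto simp: grid1_def)
        obtain d where "d \<in> grid1 n" "d \<noteq> c" "key n c = key n d" using partner[OF g assms] by blast
        then have "{c,d} \<in> piset n" using g unfolding piset_def by blast
        then show ?thesis by blast
      qed
    qed
  qed
next
  fix P assume "P \<in> piset n" then show "P \<noteq> {}" by (auto simp: piset_def)
next
  fix P Q assume P: "P \<in> piset n" and Q: "Q \<in> piset n" and ne: "P \<noteq> Q"
  show "P \<inter> Q = {}"
  proof (rule ccontr)
    assume "P \<inter> Q \<noteq> {}"
    then obtain z where z: "z \<in> P" "z \<in> Q" by blast
    show False
    proof (cases "z \<in> grid1 n")
      case True
      obtain c d where cd: "P = {c,d}" "c \<in> grid1 n" "d \<in> grid1 n" "c \<noteq> d" "key n c = key n d"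
        using grid_block[OF P z(1) True] by blast
      obtain c' d' where cd': "Q = {c',d'}" "c' \<in> grid1 n" "d' \<in> grid1 n" "c' \<noteq> d'" "key n c' = key n d'"
        using grid_block[OF Q z(2) True] by blast
      show False using block_eq[OF cd cd' z] ne by simp
    next
      case False
      show False using nongrid_block[OF P z(1) False] nongrid_block[OF Q z(2) False] ne by simp
    qed
  qed
qed

lemma piset_card: "P \<in> piset n \<Longrightarrow> P \<noteq> {(0,0)} \<Longrightarrow> card P = 2"
  by (auto simp: piset_def)

theorem mainTheorem9:
  fixes n :: nat
  assumes "n \<ge> 3"
  shows "\<exists>\<pi> :: (nat \<times> nat) set set.
     is_partition \<pi> ({0..2*n} \<times> {0..2*n}) \<and>
     {(0, 0)} \<in> \<pi> \<and>
     (\<forall>P \<in> \<pi>. P \<noteq> {(0, 0)} \<longrightarrow> card P = 2) \<and>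
     nondegenerate (2*n+1) (2*n+1) \<pi> \<and>
     \<not> amenable (Gamma (2*n+1) (2*n+1) \<pi>) \<and>
     sofic (Gamma (2*n+1) (2*n+1) \<pi>)"
proof -
  have n2: "2 \<le> n" using assms by simp
  interpret gam n using n2 by unfold_locales
  have z: "{(0, 0)} \<in> piset n" by (simp add: piset_def)
  have c: "\<forall>P \<in> piset n. P \<noteq> {(0, 0)} \<longrightarrow> card P = 2" using piset_card by blast
  have na: "\<not> amenable (Gamma (2*n+1) (2*n+1) (piset n))" using not_amenable by (simp add: GG_def)
  have so: "sofic (Gamma (2*n+1) (2*n+1) (piset n))" using sofic_G by (simp add: GG_def)
  show ?thesis
    by (rule exI[of _ "piset n"]) (intro conjI piset_partition[OF n2] z c nondeg na so)
qed


end
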